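(* Let $X\sim p$ be a norm-subgaussian random vector in $\mathbb{R}^d$, let $s_\theta\colon[0,T_1]\times\mathbb{R}^d\to\mathbb{R}^d$ be Lipschitz continuous, and for each $t$ let $L_s(t)\in\mathbb{R}$ satisfy $(s_\theta(t,x)-s_\theta(t,y))\cdot(x-y)\le L_s(t)\|x-y\|^2$ for all $x,y$. Let $(p_t)_{t\ge0}$ be the laws of the Ornstein--Uhlenbeck process $dX_t=-X_t\,dt+\sqrt2\,dB_t$ with $X_0=X$. Pick $0<\delta<1$ and $T_1\ge\log\big(\frac{16}{\delta}d(\|X\|_{\psi_2}+1)\big)$. Define $\tilde s_\theta\colon\mathbb{R}^d\to\mathbb{R}^d$ componentwise by, with $\ell=\ell(x)=\frac{\delta}{2d}(1+\|x\|)$, $$[\tilde s_\theta(x)]_i=\begin{cases}[s_\theta(T_1,x)]_i,&\text{if }|-x_i-[s_\theta(T_1,x)]_i|\le\ell,\\ -x_i-\ell,&\text{if }[s_\theta(T_1,x)]_i<-x_i-\ell,\\ -x_i+\ell,&\text{if }[s_\theta(T_1,x)]_i>-x_i+\ell.\end{cases}$$ Fix $0<\epsilon<1$ and let $b(T_1)=\mathbb{E}_{p_{T_1}}[\|\nabla\log p_{T_1}-s_\theta(T_1,\cdot)\|^2]$. Then for all $0<\beta\le\frac{1}{36\delta^2}$, $$\log\mathbb{E}_{p_{T_1}}\Big[\exp\big(\beta\|\nabla\log p_{T_1}-\tilde s_\theta\|^2\big)\Big]\le\epsilon,$$ provided that $b(T_1)\le\frac{1}{550\beta}\epsilon^{2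+36\beta\delta^2}$.
   Context: An $\mathbb{R}^d$-valued random variable $X$ is norm-subgaussian if $\|X\|_{\psi_2}:=\inf\{t>0:\mathbb{E}[e^{\|X\|^2/t^2}]\le2\}<\infty$, where $\|\cdot\|$ is the Euclidean norm. Laws are identified with their Lebesgue densities. *)

theory Defs
  imports "HOL-Analysis.Analysis"
begin

definition psi2_norm :: "('a::euclidean_space \<Rightarrow> real) \<Rightarrow> real" where
  "psi2_norm p = Inf {t. t > 0 \<and>
     (\<integral>\<^sup>+ x. ennreal (p x * exp ((norm x)^2 / t^2)) \<partial>lborel) \<le> 2}"

definition norm_subgaussian :: "('a::euclidean_space \<Rightarrow> real) \<Rightarrow> bool" where
  "norm_subgaussian p \<longleftrightarrow> (\<exists>t>0.
     (\<integral>\<^sup>+ x. ennreal (p x * exp ((norm x)^2 / t^2)) \<partial>lborel) \<le> 2)"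

text \<open>Density of the Ornstein--Uhlenbeck marginal p_t (t > 0) of
  dX_t = -X_t dt + sqrt 2 dB_t with X_0 having density p:
  X_t = e^{-t} X_0 + sqrt(1 - e^{-2t}) Z, Z standard Gaussian.\<close>
definition ou_density :: "('a::euclidean_space \<Rightarrow> real) \<Rightarrow> real \<Rightarrow> 'a \<Rightarrow> real" where
  "ou_density p t y = (let var = 1 - exp (-2*t) in
     LINT x|lborel. p x * ((2*pi * var) powr (-(real DIM('a))/2) *
        exp (- ((norm (y - exp (-t) *\<^sub>R x))^2) / (2 * var))))"

definition grad :: "(real^'n \<Rightarrow> real) \<Rightarrow> real^'n \<Rightarrow> real^'n" where
  "grad f x = (\<chi> i. frechet_derivative f (at x) (axis i 1))"

definition clip_score :: "real \<Rightarrow> (real^'n \<Rightarrow> real^'n) \<Rightarrow> real^'n \<Rightarrow> real^'n" where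
  "clip_score \<delta> s x = (let l = \<delta> / (2 * real CARD('n)) * (1 + norm x) in
     (\<chi> i. if \<bar>- (x$i) - (s x)$i\<bar> \<le> l then (s x)$i
           else if (s x)$i < - (x$i) - l then - (x$i) - l
           else - (x$i) + l))"

end

theory Submission
  imports Defs "HOL-Probability.Distributions"
begin

lemma gauss1:
  fixes V c m :: real
  assumes V: "V > 0" and c: "2 * c * V < 1"
  shows "(\<integral>\<^sup>+ s. ennreal ((2 * pi * V) powr (-1/2)  *  exp (- (s-m)\<^sup>2/(2 * V))  *  exp (c * s\<^sup>2)) \<partial>lborel)
       = ennreal ((1-2 * c * V) powr (-1/2)  *  exp (c * m\<^sup>2/(1-2 * c * V)))"
proof -
  define r where "r = 1 - 2 * c * V"
  have r: "r > 0" using c r_def by simp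
  define \<sigma> where "\<sigma> = sqrt (V/r)"
  define \<mu> where "\<mu> = m / r"
  have sp: "\<sigma> > 0" using V r by (simp add: \<sigma>_def)
  have s2: "\<sigma>\<^sup>2 = V/r" using V r by (simp add: \<sigma>_def)
  have eq: "(2 * pi * V) powr (-1/2)  *  exp (- (s-m)\<^sup>2/(2 * V))  *  exp (c * s\<^sup>2)
      = (r powr (-1/2)  *  exp (c * m\<^sup>2/r))  *  normal_density \<mu> \<sigma> s" for s
  proof -
    have e: "-(s-m)\<^sup>2/(2 * V) + c * s\<^sup>2 = c * m\<^sup>2/r + (- (s-\<mu>)\<^sup>2/(2 * \<sigma>\<^sup>2))"
    proof -
      have cd: "c = (1-r)/(2 * V)" using V unfolding r_def by (simp add: field_simps)
      show ?thesis unfolding s2 \<mu>_def cd using V r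
        by (simp add: field_simps power2_eq_square)
    qed
    have n: "1 / sqrt (2 * pi * \<sigma>\<^sup>2) = (2 * pi * V) powr (-1/2)  *  sqrt r"
      unfolding s2 using V r
      by (simp add: powr_minus_divide powr_half_sqrt real_sqrt_divide real_sqrt_mult field_simps)
    have rr: "r powr (-1/2)  *  sqrt r = 1" using r
      by (simp add: powr_minus_divide powr_half_sqrt)
    have "(2 * pi * V) powr (-1/2)  *  exp (- (s-m)\<^sup>2/(2 * V))  *  exp (c * s\<^sup>2)
        = (2 * pi * V) powr (-1/2)  *  exp (c * m\<^sup>2/r)  *  exp (- (s-\<mu>)\<^sup>2/(2 * \<sigma>\<^sup>2))"
      by (simp only: mult.assoc exp_add[symmetric] e)
    also have "\<dots> = (r powr (-1/2)  *  sqrt r)  *  (2 * pi * V) powr (-1/2)  *  exp (c * m\<^sup>2/r)  *  exp (- (s-\<mu>)\<^sup>2/(2 * \<sigma>\<^sup>2))"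
      unfolding rr by simp
    also have "\<dots> = (r powr (-1/2)  *  exp (c * m\<^sup>2/r))  *  normal_density \<mu> \<sigma> s"
      unfolding normal_density_def n by (simp add: algebra_simps)
    finally show ?thesis .
  qed
  have "(\<integral>\<^sup>+ s. ennreal ((2 * pi * V) powr (-1/2)  *  exp (- (s-m)\<^sup>2/(2 * V))  *  exp (c * s\<^sup>2)) \<partial>lborel)
      = (\<integral>\<^sup>+ s. ennreal (r powr (-1/2)  *  exp (c * m\<^sup>2/r))  *  ennreal (normal_density \<mu> \<sigma> s) \<partial>lborel)"
    unfolding eq by (intro nn_integral_cong) (simp add: ennreal_mult')
  also have "\<dots> = ennreal (r powr (-1/2)  *  exp (c * m\<^sup>2/r))  *  (\<integral>\<^sup>+ s. ennreal (normal_density \<mu> \<sigma> s) \<partial>lborel)"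
    by (simp add: nn_integral_cmult)
  also have "(\<integral>\<^sup>+ s. ennreal (normal_density \<mu> \<sigma> s) \<partial>lborel) = 1"
    using nn_integral_eq_integral[of lborel "normal_density \<mu> \<sigma>"] sp by simp
  finally show ?thesis by (simp add: r_def)
qed

lemma gaussd:
  fixes m :: "'a::euclidean_space" and V c :: real
  assumes V: "V > 0" and c: "2 * c * V < 1"
  shows "(\<integral>\<^sup>+ y. ennreal ((2 * pi * V) powr (- real DIM('a) / 2) * exp (- ((norm (y - m))\<^sup>2) / (2 * V)) * exp (c * (norm y)\<^sup>2)) \<partial>lborel)
       = ennreal ((1 - 2 * c * V) powr (- real DIM('a) / 2) * exp (c * (norm m)\<^sup>2 / (1 - 2 * c * V)))"
proof -
  define f where "f b t = ennreal ((2 * pi * V) powr (-1/2) * exp (- (t - m \<bullet> b)\<^sup>2/(2 * V)) * exp (c * t\<^sup>2))" for b :: 'a and t :: real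
  have pw: "K powr (- real DIM('a) / 2) = (K powr (-1/2)) ^ DIM('a)" if "K > 0" for K :: real
  proof -
    have "(K powr (-1/2)) ^ DIM('a) = (K powr (-1/2)) powr (real DIM('a))" using that by (simp add: powr_realpow)
    also have "\<dots> = K powr (- real DIM('a) / 2)" by (simp add: powr_powr)
    finally show ?thesis by simp
  qed
  have nsq: "(norm x)\<^sup>2 = (\<Sum>b\<in>(Basis::'a set). (x \<bullet> b)\<^sup>2)" for x :: 'a
    unfolding power2_norm_eq_inner by (subst euclidean_inner) (simp add: power2_eq_square)
  have r: "1 - 2 * c * V > 0" using c by simp
  have pV: "2 * pi * V > 0" using V by simp
  have eq: "ennreal ((2 * pi * V) powr (- real DIM('a) / 2) * exp (- ((norm (y - m))\<^sup>2) / (2 * V)) * exp (c * (norm y)\<^sup>2))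
      = (\<Prod>b\<in>Basis. f b (y \<bullet> b))" for y
  proof -
    have "(2 * pi * V) powr (- real DIM('a) / 2) * exp (- ((norm (y - m))\<^sup>2) / (2 * V)) * exp (c * (norm y)\<^sup>2)
       = (\<Prod>b\<in>(Basis::'a set). (2 * pi * V) powr (-1/2)) * (\<Prod>b\<in>Basis. exp (- (y \<bullet> b - m \<bullet> b)\<^sup>2/(2 * V))) * (\<Prod>b\<in>Basis. exp (c * (y \<bullet> b)\<^sup>2))"
      unfolding pw[OF pV] by (simp add: V nsq[of "y - m"] nsq[of y] inner_diff_left exp_sum[symmetric] sum_divide_distrib[symmetric] sum_distrib_left sum_negf)
    also have "\<dots> = (\<Prod>b\<in>Basis. (2 * pi * V) powr (-1/2) * exp (- (y \<bullet> b - m \<bullet> b)\<^sup>2/(2 * V)) * exp (c * (y \<bullet> b)\<^sup>2))"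
      by (simp add: prod.distrib)
    finally show ?thesis unfolding f_def by (simp add: prod_ennreal)
  qed
  have "(\<integral>\<^sup>+ y. ennreal ((2 * pi * V) powr (- real DIM('a) / 2) * exp (- ((norm (y - m))\<^sup>2) / (2 * V)) * exp (c * (norm y)\<^sup>2)) \<partial>lborel)
      = (\<Prod>b\<in>Basis. (\<integral>\<^sup>+ t. f b t \<partial>lborel))"
    unfolding eq by (rule nn_integral_lborel_prod) (auto simp: f_def)
  also have "\<dots> = (\<Prod>b\<in>Basis. ennreal ((1-2 * c * V) powr (-1/2) * exp (c * (m \<bullet> b)\<^sup>2/(1-2 * c * V))))"
    unfolding f_def using gauss1[OF V c] by simp
  also have "\<dots> = ennreal ((\<Prod>b\<in>(Basis::'a set). (1-2 * c * V) powr (-1/2)) * (\<Prod>b\<in>Basis. exp (c * (m \<bullet> b)\<^sup>2/(1-2 * c * V))))"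
    by (simp add: prod_ennreal prod.distrib)
  also have "\<dots> = ennreal ((1 - 2 * c * V) powr (- real DIM('a) / 2) * exp (c * (norm m)\<^sup>2 / (1 - 2 * c * V)))"
    unfolding pw[OF r] by (simp add: nsq[of m] exp_sum sum_divide_distrib sum_distrib_left)
  finally show ?thesis .
qed

definition kern :: "real \<Rightarrow> real \<Rightarrow> 'a::euclidean_space \<Rightarrow> 'a \<Rightarrow> real" where
  "kern V a y x = (2 * pi * V) powr (- real DIM('a) / 2) * exp (- ((norm (y - a *\<^sub>R x))\<^sup>2) / (2 * V))"

lemma kern_nonneg: "kern V a (y::'a::euclidean_space) x \<ge> 0" by (simp add: kern_def)

lemma kern_pos: "V > 0 \<Longrightarrow> kern V a (y::'a::euclidean_space) x > 0" by (simp add: kern_def)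

lemma kern_le: "V > 0 \<Longrightarrow> kern V a (y::'a::euclidean_space) x \<le> (2 * pi * V) powr (- real DIM('a) / 2)"
  by (simp add: kern_def)

lemma kern_meas[measurable]: "(\<lambda>(x, y). kern V a (y::'a::euclidean_space) x) \<in> borel_measurable (lborel \<Otimes>\<^sub>M lborel)"
  unfolding kern_def by measurable

lemma kern_meas2[measurable]: "(\<lambda>x. kern V a (y::'a::euclidean_space) x) \<in> borel_measurable lborel"
  unfolding kern_def by measurable

lemma integrable_p_kern:
  fixes p :: "'a::euclidean_space \<Rightarrow> real"
  assumes pm: "p \<in> borel_measurable borel" and pint: "integrable lborel p" and V: "V > 0"
  shows "integrable lborel (\<lambda>x. p x * kern V a y x)"
proof (rule Bochner_Integration.integrable_bound[where f="\<lambda>x::'a. (2 * pi * V) powr (- real DIM('a) / 2) * p x"])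
  show "integrable lborel (\<lambda>x. (2 * pi * V) powr (- real DIM('a) / 2) * p x)" using pint by simp
  show "(\<lambda>x. p x * kern V a y x) \<in> borel_measurable lborel" using pm by measurable
  show "AE x in lborel. norm (p x * kern V a y x) \<le> norm ((2 * pi * V) powr (- real DIM('a) / 2) * p x)"
  proof (rule AE_I2)
    fix x
    have "\<bar>p x\<bar> * kern V a y x \<le> \<bar>p x\<bar> * (2 * pi * V) powr (- real DIM('a) / 2)"
      using kern_le[OF V, of a y x] by (intro mult_left_mono) auto
    then show "norm (p x * kern V a y x) \<le> norm ((2 * pi * V) powr (- real DIM('a) / 2) * p x)"
      using kern_nonneg[of V a y x] by (simp add: abs_mult mult.commute)
  qed
qed

lemma q_moment:
  fixes p :: "'a::euclidean_space \<Rightarrow> real"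
  assumes pm: "p \<in> borel_measurable borel" and pn: "\<And>x. p x \<ge> 0" and pint: "integrable lborel p"
    and V: "V > 0" and c: "2 * c * V < 1"
  shows "(\<integral>\<^sup>+ y. ennreal ((LINT x|lborel. p x * kern V a y x) * exp (c * (norm y)\<^sup>2)) \<partial>lborel)
       = ennreal ((1 - 2 * c * V) powr (- real DIM('a) / 2)) * (\<integral>\<^sup>+ x. ennreal (p x * exp (c * (norm (a *\<^sub>R x))\<^sup>2 / (1 - 2 * c * V))) \<partial>lborel)"
proof -
  have q: "ennreal (LINT x|lborel. p x * kern V a y x) = (\<integral>\<^sup>+ x. ennreal (p x * kern V a y x) \<partial>lborel)" for y
    by (rule nn_integral_eq_integral[symmetric]) (auto intro: integrable_p_kern[OF pm pint V] simp: pn kern_nonneg)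
  have "(\<integral>\<^sup>+ y. ennreal ((LINT x|lborel. p x * kern V a y x) * exp (c * (norm y)\<^sup>2)) \<partial>lborel)
     = (\<integral>\<^sup>+ y. (\<integral>\<^sup>+ x. ennreal (p x * kern V a y x * exp (c * (norm y)\<^sup>2)) \<partial>lborel) \<partial>lborel)"
  proof (intro nn_integral_cong)
    fix y :: 'a
    have "ennreal ((LINT x|lborel. p x * kern V a y x) * exp (c * (norm y)\<^sup>2))
        = ennreal (LINT x|lborel. p x * kern V a y x) * ennreal (exp (c * (norm y)\<^sup>2))"
      by (rule ennreal_mult) (auto intro!: integral_nonneg_AE simp: pn kern_nonneg)
    also have "\<dots> = (\<integral>\<^sup>+ x. ennreal (p x * kern V a y x) * ennreal (exp (c * (norm y)\<^sup>2)) \<partial>lborel)"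
      unfolding q using pm by (subst nn_integral_multc) auto
    also have "\<dots> = (\<integral>\<^sup>+ x. ennreal (p x * kern V a y x * exp (c * (norm y)\<^sup>2)) \<partial>lborel)"
      by (intro nn_integral_cong) (simp add: ennreal_mult' pn kern_nonneg)
    finally show "ennreal ((LINT x|lborel. p x * kern V a y x) * exp (c * (norm y)\<^sup>2))
        = (\<integral>\<^sup>+ x. ennreal (p x * kern V a y x * exp (c * (norm y)\<^sup>2)) \<partial>lborel)" .
  qed
  also have "\<dots> = (\<integral>\<^sup>+ x. (\<integral>\<^sup>+ y. ennreal (p x * kern V a y x * exp (c * (norm y)\<^sup>2)) \<partial>lborel) \<partial>lborel)"
    by (rule lborel_pair.Fubini') (use pm in measurable)
  also have "\<dots> = (\<integral>\<^sup>+ x. ennreal (p x) * ennreal ((1 - 2 * c * V) powr (- real DIM('a) / 2) * exp (c * (norm (a *\<^sub>R x))\<^sup>2 / (1 - 2 * c * V))) \<partial>lborel)"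
  proof (intro nn_integral_cong)
    fix x :: 'a
    have "(\<integral>\<^sup>+ y. ennreal (p x * kern V a y x * exp (c * (norm y)\<^sup>2)) \<partial>lborel)
       = (\<integral>\<^sup>+ y. ennreal (p x) * ennreal (kern V a y x * exp (c * (norm y)\<^sup>2)) \<partial>lborel)"
      by (intro nn_integral_cong) (simp add: ennreal_mult' pn kern_nonneg mult.assoc)
    also have "\<dots> = ennreal (p x) * (\<integral>\<^sup>+ y. ennreal (kern V a y x * exp (c * (norm y)\<^sup>2)) \<partial>lborel)"
      by (rule nn_integral_cmult) measurable
    also have "(\<integral>\<^sup>+ y. ennreal (kern V a y x * exp (c * (norm y)\<^sup>2)) \<partial>lborel)
       = ennreal ((1 - 2 * c * V) powr (- real DIM('a) / 2) * exp (c * (norm (a *\<^sub>R x))\<^sup>2 / (1 - 2 * c * V)))"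
      unfolding kern_def by (rule gaussd[OF V c])
    finally show "(\<integral>\<^sup>+ y. ennreal (p x * kern V a y x * exp (c * (norm y)\<^sup>2)) \<partial>lborel)
       = ennreal (p x) * ennreal ((1 - 2 * c * V) powr (- real DIM('a) / 2) * exp (c * (norm (a *\<^sub>R x))\<^sup>2 / (1 - 2 * c * V)))" .
  qed
  also have "\<dots> = (\<integral>\<^sup>+ x. ennreal ((1 - 2 * c * V) powr (- real DIM('a) / 2)) * ennreal (p x * exp (c * (norm (a *\<^sub>R x))\<^sup>2 / (1 - 2 * c * V))) \<partial>lborel)"
    by (intro nn_integral_cong) (simp add: ennreal_mult'[symmetric] pn mult_ac)
  also have "\<dots> = ennreal ((1 - 2 * c * V) powr (- real DIM('a) / 2)) * (\<integral>\<^sup>+ x. ennreal (p x * exp (c * (norm (a *\<^sub>R x))\<^sup>2 / (1 - 2 * c * V))) \<partial>lborel)"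
    by (rule nn_integral_cmult) (use pm in measurable)
  finally show ?thesis .
qed

lemma exp_mul_le: "(V::real) > 0 \<Longrightarrow> (r::real) \<ge> 0 \<Longrightarrow> exp (- r / (2 * V)) * r \<le> 2 * V"
proof -
  assume V: "V > 0" and r: "r \<ge> 0"
  have "r / (2 * V) \<le> exp (r / (2 * V))" using exp_ge_add_one_self[of "r/(2*V)"] by linarith
  then have "r \<le> 2 * V * exp (r / (2 * V))" using V by (simp add: field_simps)
  then have "exp (- r / (2 * V)) * r \<le> exp (- r / (2 * V)) * (2 * V * exp (r / (2 * V)))"
    by (intro mult_left_mono) auto
  also have "\<dots> = 2 * V" by (simp add: exp_minus field_simps)
  finally show ?thesis .
qed

lemma gtaylor:
  fixes u h :: "'a::euclidean_space"
  assumes V: "V > 0" and c0: "c0 \<ge> 0"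
  shows "\<bar>c0 * exp (- ((norm (u + h))\<^sup>2) / (2 * V)) - c0 * exp (- ((norm u)\<^sup>2) / (2 * V))
            + c0 * exp (- ((norm u)\<^sup>2) / (2 * V)) * (u \<bullet> h) / V\<bar> \<le> 3 * c0 / (2 * V) * (norm h)\<^sup>2"
proof -
  define A where "A = (norm u)\<^sup>2"
  define B where "B = u \<bullet> h"
  define C where "C = (norm h)\<^sup>2"
  define P where "P t = - (A / (2 * V)) - t * (B / V) - t\<^sup>2 * (C / (2 * V))" for t :: real
  define f0 where "f0 t = c0 * exp (P t)" for t
  define Q where "Q t = - (B + t * C) / V" for t :: real
  define f1 where "f1 t = c0 * exp (P t) * Q t" for t
  define f2 where "f2 t = c0 * exp (P t) * ((B + t * C)\<^sup>2 / V\<^sup>2 - C / V)" for t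
  define df where "df m = (if m = 0 then f0 else if m = 1 then f1 else f2)" for m :: nat
  have nP: "(norm (u + t *\<^sub>R h))\<^sup>2 = A + 2 * t * B + t\<^sup>2 * C" for t
    unfolding A_def B_def C_def power2_norm_eq_inner
    by (simp add: inner_add_left inner_add_right inner_commute power2_eq_square algebra_simps)
  have dP: "DERIV P t :> Q t" for t
    unfolding P_def Q_def
    apply (rule derivative_eq_intros refl)+
    using V apply (simp add: field_simps)
    done
  have dQ: "DERIV Q t :> - C / V" for t
  proof -
    have e: "Q = (\<lambda>t. - (B / V) - t * (C / V))" unfolding Q_def
      using V by (intro ext) (simp add: field_simps)
    show ?thesis unfolding e
      by (rule derivative_eq_intros refl)+ simp
  qed
  have d0: "DERIV f0 t :> f1 t" for t
    unfolding f0_def f1_def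
    apply (rule derivative_eq_intros refl dP)+
    apply (simp add: mult_ac)
    done
  have d1: "DERIV f1 t :> f2 t" for t
    unfolding f1_def f2_def
    apply (rule derivative_eq_intros refl dP dQ)+
    using V apply (simp add: Q_def field_simps power2_eq_square)
    done
  have "\<exists>t. 0 < t \<and> t < 1 \<and> f0 1 = (\<Sum>m<2. (df m 0 / fact m) * 1 ^ m) + (df 2 t / fact 2) * 1 ^ 2"
    by (rule Maclaurin[of 1 2 df f0]) (auto simp: df_def d0 d1 less_2_cases_iff)
  then obtain t where t: "0 < t" "t < 1" "f0 1 = f0 0 + f1 0 + f2 t / 2"
    by (auto simp: df_def eval_nat_numeral)
  have bnd: "\<bar>f2 t\<bar> \<le> 3 * c0 * C / V"
  proof -
    define r where "r = (norm (u + t *\<^sub>R h))\<^sup>2"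
    have Pr: "P t = - r / (2 * V)" unfolding P_def r_def nP using V by (simp add: field_simps)
    have BC: "(B + t * C)\<^sup>2 \<le> r * C"
    proof -
      have "B + t * C = (u + t *\<^sub>R h) \<bullet> h" unfolding B_def C_def power2_norm_eq_inner
        by (simp add: inner_add_left)
      then have "\<bar>B + t * C\<bar> \<le> norm (u + t *\<^sub>R h) * norm h" using Cauchy_Schwarz_ineq2 by simp
      then have "(B + t * C)\<^sup>2 \<le> (norm (u + t *\<^sub>R h) * norm h)\<^sup>2"
        by (metis abs_ge_zero power2_abs power_mono)
      then show ?thesis unfolding r_def C_def by (simp add: power_mult_distrib)
    qed
    have r0: "r \<ge> 0" unfolding r_def by simp
    have C0: "C \<ge> 0" unfolding C_def by simp
    have e1: "exp (P t) * r \<le> 2 * V" unfolding Pr using exp_mul_le[OF V r0] .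
    have "exp (P t) * ((B + t * C)\<^sup>2 / V\<^sup>2) \<le> exp (P t) * (r * C / V\<^sup>2)"
      using BC V by (intro mult_left_mono divide_right_mono) auto
    also have "\<dots> = (exp (P t) * r) * C / V\<^sup>2" by simp
    also have "\<dots> \<le> (2 * V) * C / V\<^sup>2" using e1 C0 V by (intro divide_right_mono mult_right_mono) auto
    also have "\<dots> = 2 * C / V" using V by (simp add: power2_eq_square)
    finally have i1: "exp (P t) * ((B + t * C)\<^sup>2 / V\<^sup>2) \<le> 2 * C / V" .
    have i2: "exp (P t) * (C / V) \<le> C / V"
    proof -
      have "P t \<le> 0" unfolding Pr using r0 V by (simp add: divide_nonpos_pos)
      then have "exp (P t) \<le> 1" by simp
      moreover have "C / V \<ge> 0" using C0 V by simp
      ultimately show ?thesis by (intro mult_left_le_one_le) auto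
    qed
    have "\<bar>exp (P t) * ((B + t * C)\<^sup>2 / V\<^sup>2 - C / V)\<bar> \<le> 3 * C / V"
    proof -
      have eq: "exp (P t) * ((B + t * C)\<^sup>2 / V\<^sup>2 - C / V) = exp (P t) * ((B + t * C)\<^sup>2 / V\<^sup>2) - exp (P t) * (C / V)"
        by (simp add: right_diff_distrib)
      have X0: "0 \<le> exp (P t) * ((B + t * C)\<^sup>2 / V\<^sup>2)" by simp
      have Y0: "0 \<le> exp (P t) * (C / V)" using C0 V by simp
      have D: "2 * C / V = 2 * (C / V)" "3 * C / V = 3 * (C / V)" by simp_all
      have D0: "C / V \<ge> 0" using C0 V by simp
      show ?thesis unfolding eq abs_le_iff using i1 i2 X0 Y0 D D0 by linarith
    qed
    then have "c0 * \<bar>exp (P t) * ((B + t * C)\<^sup>2 / V\<^sup>2 - C / V)\<bar> \<le> c0 * (3 * C / V)"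
      using c0 by (intro mult_left_mono)
    then show ?thesis unfolding f2_def using c0 by (simp add: abs_mult mult.assoc mult.left_commute)
  qed
  have f01: "f0 1 = c0 * exp (- ((norm (u + h))\<^sup>2) / (2 * V))"
    unfolding f0_def using nP[of 1] V by (simp add: P_def field_simps)
  have f00: "f0 0 = c0 * exp (- ((norm u)\<^sup>2) / (2 * V))"
    unfolding f0_def P_def A_def by (simp add: field_simps)
  have f10: "f1 0 = - c0 * exp (- ((norm u)\<^sup>2) / (2 * V)) * (u \<bullet> h) / V"
    unfolding f1_def P_def A_def B_def Q_def by (simp add: field_simps)
  have "\<bar>f0 1 - f0 0 - f1 0\<bar> \<le> 3 * c0 / (2 * V) * C"
    using t(3) bnd by (simp add: mult_ac)
  then show ?thesis unfolding f01 f00 f10 C_def by simp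
qed

lemma aux_alg: "(P::real) * (K1 - K + K * W / V) = P * K1 - P * K - P * (K * (- W / V))"
  by (simp add: algebra_simps)

lemma int_pb:
  fixes p f :: "'a::euclidean_space \<Rightarrow> real"
  assumes pint: "integrable lborel p" and fm: "f \<in> borel_measurable lborel" and pm: "p \<in> borel_measurable lborel"
    and fb: "\<And>x. \<bar>f x\<bar> \<le> M"
  shows "integrable lborel (\<lambda>x. p x * f x)"
proof (rule Bochner_Integration.integrable_bound[where f="\<lambda>x::'a. M * p x"])
  show "integrable lborel (\<lambda>x. M * p x)" using pint by simp
  show "(\<lambda>x. p x * f x) \<in> borel_measurable lborel" using pm fm by measurable
  have M0: "M \<ge> 0" using fb[of undefined] by simp
  show "AE x in lborel. norm (p x * f x) \<le> norm (M * p x)"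
  proof (rule AE_I2)
    fix x
    have "\<bar>p x\<bar> * \<bar>f x\<bar> \<le> \<bar>p x\<bar> * M" using fb[of x] by (intro mult_left_mono) auto
    then show "norm (p x * f x) \<le> norm (M * p x)" using M0 by (simp add: abs_mult mult.commute)
  qed
qed

lemma kern_inner_bound:
  fixes y x h :: "'a::euclidean_space"
  assumes V: "V > 0"
  shows "\<bar>kern V a y x * ((y - a *\<^sub>R x) \<bullet> h)\<bar> \<le> (2 * pi * V) powr (- real DIM('a) / 2) * (1 + 2 * V) * norm h"
proof -
  define c0 where "c0 = (2 * pi * V) powr (- real DIM('a) / 2)"
  define u where "u = y - a *\<^sub>R x"
  define E where "E = exp (- ((norm u)\<^sup>2) / (2 * V))"
  have k: "kern V a y x = c0 * E" unfolding kern_def c0_def E_def u_def ..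
  have E1: "E \<le> 1" "E \<ge> 0" unfolding E_def using V by (auto simp: divide_nonpos_pos)
  have E2: "E * (norm u)\<^sup>2 \<le> 2 * V" unfolding E_def using exp_mul_le[OF V, of "(norm u)\<^sup>2"] by simp
  have nu: "norm u \<le> 1 + (norm u)\<^sup>2"
  proof -
    have "0 \<le> (norm u - 1)\<^sup>2" by simp
    then have "2 * norm u \<le> 1 + (norm u)\<^sup>2" by (simp add: power2_diff)
    moreover have "0 \<le> (norm u)\<^sup>2" by simp
    ultimately show ?thesis by linarith
  qed
  have "E * norm u \<le> E * (1 + (norm u)\<^sup>2)" using E1 nu by (intro mult_left_mono) auto
  also have "\<dots> \<le> 1 + 2 * V" using E1 E2 by (simp add: algebra_simps)
  finally have Eu: "E * norm u \<le> 1 + 2 * V" .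
  have "\<bar>kern V a y x * (u \<bullet> h)\<bar> = c0 * E * \<bar>u \<bullet> h\<bar>" unfolding k c0_def using E1 by (simp add: abs_mult)
  also have "\<dots> \<le> c0 * E * (norm u * norm h)"
    using Cauchy_Schwarz_ineq2[of u h] E1 by (intro mult_left_mono) (auto simp: c0_def)
  also have "\<dots> = c0 * (E * norm u) * norm h" by simp
  also have "\<dots> \<le> c0 * (1 + 2 * V) * norm h"
    using Eu by (intro mult_right_mono mult_left_mono) (auto simp: c0_def)
  finally show ?thesis unfolding c0_def u_def .
qed

definition qf :: "('a::euclidean_space \<Rightarrow> real) \<Rightarrow> real \<Rightarrow> real \<Rightarrow> 'a \<Rightarrow> real" where
  "qf p V a y = (LINT x|lborel. p x * kern V a y x)"

definition Dq :: "('a::euclidean_space \<Rightarrow> real) \<Rightarrow> real \<Rightarrow> real \<Rightarrow> 'a \<Rightarrow> 'a \<Rightarrow> real" where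
  "Dq p V a y h = (LINT x|lborel. p x * (kern V a y x * (- ((y - a *\<^sub>R x) \<bullet> h) / V)))"

lemma integrable_Dq:
  fixes p :: "'a::euclidean_space \<Rightarrow> real"
  assumes pm: "p \<in> borel_measurable borel" and pint: "integrable lborel p" and V: "V > 0"
  shows "integrable lborel (\<lambda>x. p x * (kern V a y x * (- ((y - a *\<^sub>R x) \<bullet> h) / V)))"
proof (rule int_pb[OF pint _ _, where M = "(2 * pi * V) powr (- real DIM('a) / 2) * (1 + 2 * V) * norm h / V"])
  show "(\<lambda>x. kern V a y x * (- ((y - a *\<^sub>R x) \<bullet> h) / V)) \<in> borel_measurable lborel"
    unfolding kern_def by measurable
  show "p \<in> borel_measurable lborel" using pm by measurable
  fix x
  have "\<bar>kern V a y x * (- ((y - a *\<^sub>R x) \<bullet> h) / V)\<bar> = \<bar>kern V a y x * ((y - a *\<^sub>R x) \<bullet> h)\<bar> / V"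
    using V by (simp add: abs_mult)
  also have "\<dots> \<le> (2 * pi * V) powr (- real DIM('a) / 2) * (1 + 2 * V) * norm h / V"
    using kern_inner_bound[OF V, of a y x h] V by (intro divide_right_mono) auto
  finally show "\<bar>kern V a y x * (- ((y - a *\<^sub>R x) \<bullet> h) / V)\<bar> \<le> (2 * pi * V) powr (- real DIM('a) / 2) * (1 + 2 * V) * norm h / V" .
qed

lemma Dq_sum:
  fixes p :: "'a::euclidean_space \<Rightarrow> real"
  assumes pm: "p \<in> borel_measurable borel" and pint: "integrable lborel p" and V: "V > 0"
  shows "Dq p V a y h = (\<Sum>b\<in>Basis. (h \<bullet> b) * Dq p V a y b)"
proof -
  have "Dq p V a y h = (LINT x|lborel. (\<Sum>b\<in>Basis. (h \<bullet> b) * (p x * (kern V a y x * (- ((y - a *\<^sub>R x) \<bullet> b) / V)))))"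
    unfolding Dq_def
  proof (intro Bochner_Integration.integral_cong refl)
    fix x
    define u where "u = y - a *\<^sub>R x"
    define Z where "Z = - (p x * kern V a y x / V)"
    have e1: "p x * (kern V a y x * (- (u \<bullet> h) / V)) = Z * (u \<bullet> h)"
      unfolding Z_def by (simp add: algebra_simps)
    have e2: "(h \<bullet> b) * (p x * (kern V a y x * (- (u \<bullet> b) / V))) = Z * ((u \<bullet> b) * (h \<bullet> b))" for b
      unfolding Z_def by (simp add: algebra_simps)
    have "u \<bullet> h = (\<Sum>b\<in>Basis. (u \<bullet> b) * (h \<bullet> b))" by (rule euclidean_inner)
    then have "Z * (u \<bullet> h) = (\<Sum>b\<in>Basis. Z * ((u \<bullet> b) * (h \<bullet> b)))" by (simp add: sum_distrib_left)
    then show "p x * (kern V a y x * (- ((y - a *\<^sub>R x) \<bullet> h) / V)) = (\<Sum>b\<in>Basis. (h \<bullet> b) * (p x * (kern V a y x * (- ((y - a *\<^sub>R x) \<bullet> b) / V))))"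
      unfolding u_def[symmetric] e1 e2 .
  qed
  also have "\<dots> = (\<Sum>b\<in>Basis. (LINT x|lborel. (h \<bullet> b) * (p x * (kern V a y x * (- ((y - a *\<^sub>R x) \<bullet> b) / V)))))"
    by (rule Bochner_Integration.integral_sum, rule integrable_mult_right, rule integrable_Dq[OF pm pint V])
  also have "\<dots> = (\<Sum>b\<in>Basis. (h \<bullet> b) * Dq p V a y b)"
    unfolding Dq_def by simp
  finally show ?thesis .
qed

lemma Dq_bl:
  fixes p :: "'a::euclidean_space \<Rightarrow> real"
  assumes pm: "p \<in> borel_measurable borel" and pint: "integrable lborel p" and V: "V > 0"
  shows "bounded_linear (Dq p V a y)"
proof -
  have "Dq p V a y = (\<lambda>h. \<Sum>b\<in>Basis. (h \<bullet> b) * Dq p V a y b)"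
    by (intro ext) (rule Dq_sum[OF pm pint V])
  moreover have "bounded_linear (\<lambda>h::'a. \<Sum>b\<in>Basis. (h \<bullet> b) * Dq p V a y b)"
    by (rule bounded_linear_sum, rule bounded_linear_mult_const[OF bounded_linear_inner_left])
  ultimately show ?thesis by simp
qed

lemma q_has_derivative:
  fixes p :: "'a::euclidean_space \<Rightarrow> real"
  assumes pm: "p \<in> borel_measurable borel" and pint: "integrable lborel p" and V: "V > 0"
  shows "(qf p V a has_derivative Dq p V a y) (at y)"
  unfolding has_derivative_at_alt
proof (intro conjI allI impI Dq_bl[OF pm pint V])
  define c0 where "c0 = (2 * pi * V) powr (- real DIM('a) / 2)"
  define K where "K = 3 * c0 / (2 * V) * (LINT x|lborel. \<bar>p x\<bar>)"
  have K0: "K \<ge> 0" unfolding K_def c0_def using V by (auto intro!: integral_nonneg_AE)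
  have ik: "integrable lborel (\<lambda>x. p x * kern V a z x)" for z
    by (rule integrable_p_kern[OF pm pint V])
  have rem: "\<bar>qf p V a (y + h) - qf p V a y - Dq p V a y h\<bar> \<le> K * (norm h)\<^sup>2" for h
  proof -
    have "qf p V a (y + h) - qf p V a y - Dq p V a y h
       = (LINT x|lborel. p x * (kern V a (y + h) x - kern V a y x + kern V a y x * ((y - a *\<^sub>R x) \<bullet> h) / V))"
    proof -
      have i1: "integrable lborel (\<lambda>x. p x * kern V a (y + h) x - p x * kern V a y x)"
        by (intro Bochner_Integration.integrable_diff ik)
      have "(LINT x|lborel. p x * kern V a (y + h) x - p x * kern V a y x - p x * (kern V a y x * (- ((y - a *\<^sub>R x) \<bullet> h) / V)))
          = (LINT x|lborel. p x * kern V a (y + h) x - p x * kern V a y x) - Dq p V a y h"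
        unfolding Dq_def by (rule Bochner_Integration.integral_diff[OF i1 integrable_Dq[OF pm pint V]])
      also have "(LINT x|lborel. p x * kern V a (y + h) x - p x * kern V a y x) = qf p V a (y + h) - qf p V a y"
        unfolding qf_def by (rule Bochner_Integration.integral_diff[OF ik ik])
      finally have "qf p V a (y + h) - qf p V a y - Dq p V a y h
          = (LINT x|lborel. p x * kern V a (y + h) x - p x * kern V a y x - p x * (kern V a y x * (- ((y - a *\<^sub>R x) \<bullet> h) / V)))" by simp
      also have "\<dots> = (LINT x|lborel. p x * (kern V a (y + h) x - kern V a y x + kern V a y x * ((y - a *\<^sub>R x) \<bullet> h) / V))"
        by (intro Bochner_Integration.integral_cong refl) (rule aux_alg[symmetric])
      finally show ?thesis .
    qed
    also have "\<bar>\<dots>\<bar> \<le> (LINT x|lborel. \<bar>p x\<bar> * (3 * c0 / (2 * V) * (norm h)\<^sup>2))"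
    proof (rule integral_abs_bound_integral)
      show "integrable lborel (\<lambda>x. p x * (kern V a (y + h) x - kern V a y x + kern V a y x * ((y - a *\<^sub>R x) \<bullet> h) / V))"
      proof -
        have "(\<lambda>x. p x * (kern V a (y + h) x - kern V a y x + kern V a y x * ((y - a *\<^sub>R x) \<bullet> h) / V))
          = (\<lambda>x. p x * kern V a (y + h) x - p x * kern V a y x - p x * (kern V a y x * (- ((y - a *\<^sub>R x) \<bullet> h) / V)))"
          by (intro ext) (rule aux_alg)
        then show ?thesis using ik integrable_Dq[OF pm pint V] by simp
      qed
      show "integrable lborel (\<lambda>x. \<bar>p x\<bar> * (3 * c0 / (2 * V) * (norm h)\<^sup>2))"
        using pint by (intro integrable_mult_left integrable_abs)
      fix x :: 'a
      have "kern V a (y + h) x = c0 * exp (- ((norm ((y - a *\<^sub>R x) + h))\<^sup>2) / (2 * V))"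
        unfolding kern_def c0_def by (simp add: algebra_simps)
      moreover have "kern V a y x = c0 * exp (- ((norm (y - a *\<^sub>R x))\<^sup>2) / (2 * V))"
        unfolding kern_def c0_def ..
      ultimately have R: "\<bar>kern V a (y + h) x - kern V a y x + kern V a y x * ((y - a *\<^sub>R x) \<bullet> h) / V\<bar> \<le> 3 * c0 / (2 * V) * (norm h)\<^sup>2"
        using gtaylor[OF V, of c0 "y - a *\<^sub>R x" h] by (simp add: c0_def)
      have "\<bar>p x\<bar> * \<bar>kern V a (y + h) x - kern V a y x + kern V a y x * ((y - a *\<^sub>R x) \<bullet> h) / V\<bar> \<le> \<bar>p x\<bar> * (3 * c0 / (2 * V) * (norm h)\<^sup>2)"
        by (rule mult_left_mono[OF R abs_ge_zero])
      then show "\<bar>p x * (kern V a (y + h) x - kern V a y x + kern V a y x * ((y - a *\<^sub>R x) \<bullet> h) / V)\<bar> \<le> \<bar>p x\<bar> * (3 * c0 / (2 * V) * (norm h)\<^sup>2)"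
        by (simp only: abs_mult)
    qed
    also have "\<dots> = K * (norm h)\<^sup>2" unfolding K_def by simp
    finally show ?thesis .
  qed
  fix e :: real assume e: "e > 0"
  show "\<exists>d>0. \<forall>z. norm (z - y) < d \<longrightarrow> norm (qf p V a z - qf p V a y - Dq p V a y (z - y)) \<le> e * norm (z - y)"
  proof (intro exI[of _ "e / (K + 1)"] conjI allI impI)
    show "e / (K + 1) > 0" using e K0 by simp
    fix z assume z: "norm (z - y) < e / (K + 1)"
    have "\<bar>qf p V a z - qf p V a y - Dq p V a y (z - y)\<bar> \<le> K * (norm (z - y))\<^sup>2"
      using rem[of "z - y"] by simp
    also have "\<dots> = (K * norm (z - y)) * norm (z - y)" by (simp add: power2_eq_square)
    also have "\<dots> \<le> e * norm (z - y)"
    proof (intro mult_right_mono)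
      have "K * norm (z - y) \<le> (K + 1) * norm (z - y)" by (simp add: mult_right_mono)
      also have "\<dots> \<le> (K + 1) * (e / (K + 1))" using z K0 by (intro mult_left_mono) auto
      also have "\<dots> = e" using K0 by simp
      finally show "K * norm (z - y) \<le> e" .
    qed simp
    finally show "norm (qf p V a z - qf p V a y - Dq p V a y (z - y)) \<le> e * norm (z - y)" by simp
  qed
qed

lemma E_main:
  fixes p k :: "'a::euclidean_space \<Rightarrow> real"
  assumes pm: "p \<in> borel_measurable lborel" and pn: "\<And>x. p x \<ge> 0" and pint: "integrable lborel p"
    and p1: "(LINT x|lborel. p x) = 1"
    and peint: "integrable lborel (\<lambda>x. p x * exp ((norm x)\<^sup>2 / \<tau>\<^sup>2))"
    and pe2: "(LINT x|lborel. p x * exp ((norm x)\<^sup>2 / \<tau>\<^sup>2)) \<le> 2"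
    and R: "R > 0" and eR: "exp (- R\<^sup>2 / (4 * \<tau>\<^sup>2)) \<le> 1/4" and \<tau>: "\<tau> > 0"
    and km: "kmin > 0" and kn: "\<And>x. k x \<ge> 0"
    and k1: "\<And>x. norm x \<le> R / 2 \<Longrightarrow> k x \<ge> kmin"
    and k2: "\<And>x. norm x > R \<Longrightarrow> k x * norm x \<le> kmin * (R / 8) * exp ((norm x)\<^sup>2 / \<tau>\<^sup>2)"
    and pk: "integrable lborel (\<lambda>x. p x * k x)"
    and pkn: "integrable lborel (\<lambda>x. p x * k x * norm x)"
  shows "(LINT x|lborel. p x * k x * norm x) \<le> R * (LINT x|lborel. p x * k x)"
    and "(LINT x|lborel. p x * k x) \<ge> kmin / 2"
proof -
  define c where "c = exp (- R\<^sup>2 / (4 * \<tau>\<^sup>2))"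
  define pe where "pe x = p x * exp ((norm x)\<^sup>2 / \<tau>\<^sup>2)" for x
  have c0: "c \<ge> 0" "c \<le> 1/4" using eR by (auto simp: c_def)
  have big: "c * pe x \<ge> p x" if "norm x > R / 2" for x
  proof -
    have "R\<^sup>2 / 4 \<le> (norm x)\<^sup>2"
    proof -
      have "R / 2 \<le> norm x" using that by simp
      then have "(R/2)\<^sup>2 \<le> (norm x)\<^sup>2" using R by (intro power_mono) auto
      then show ?thesis by (simp add: power_divide)
    qed
    then have "- R\<^sup>2 / (4 * \<tau>\<^sup>2) + (norm x)\<^sup>2 / \<tau>\<^sup>2 \<ge> 0" using \<tau>
      by (simp add: field_simps)
    then have "c * exp ((norm x)\<^sup>2 / \<tau>\<^sup>2) \<ge> 1" unfolding c_def
      by (simp add: exp_add[symmetric])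
    then have "p x * 1 \<le> p x * (c * exp ((norm x)\<^sup>2 / \<tau>\<^sup>2))" using pn[of x] by (intro mult_left_mono) auto
    then show ?thesis unfolding pe_def by (simp add: mult_ac)
  qed
  have pen: "pe x \<ge> 0" for x unfolding pe_def using pn[of x] by simp
  have pw: "p x * k x * norm x - R * (p x * k x) \<le> kmin * R * (- (1/2) * p x + (1/2) * (c * pe x) + (1/8) * pe x)" for x
  proof (cases "norm x \<le> R / 2")
    case True
    have "p x * k x * norm x - R * (p x * k x) = (p x * k x) * (norm x - R)" by (simp add: algebra_simps)
    also have "\<dots> \<le> (p x * k x) * (- R / 2)" using True pn[of x] kn[of x] by (intro mult_left_mono) auto
    also have "\<dots> \<le> (p x * kmin) * (- R / 2)"
      using k1[OF True] pn[of x] R by (intro mult_right_mono_neg mult_left_mono) auto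
    finally have A: "p x * k x * norm x - R * (p x * k x) \<le> - (1/2) * kmin * R * p x" by (simp add: algebra_simps)
    have "0 \<le> kmin * R * ((1/2) * (c * pe x) + (1/8) * pe x)"
      using km R c0 pen[of x] by (intro mult_nonneg_nonneg add_nonneg_nonneg) auto
    with A show ?thesis by (simp add: algebra_simps)
  next
    case False
    then have nx: "norm x > R / 2" by simp
    have B: "0 \<le> kmin * R * (- (1/2) * p x + (1/2) * (c * pe x))"
      using big[OF nx] km R by (intro mult_nonneg_nonneg) auto
    show ?thesis
    proof (cases "norm x \<le> R")
      case True
      have "p x * k x * norm x - R * (p x * k x) = (p x * k x) * (norm x - R)" by (simp add: algebra_simps)
      also have "\<dots> \<le> 0" using True pn[of x] kn[of x] by (intro mult_nonneg_nonpos) auto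
      finally have "p x * k x * norm x - R * (p x * k x) \<le> 0" .
      moreover have "0 \<le> kmin * R * ((1/8) * pe x)" using km R pen[of x] by simp
      ultimately show ?thesis using B by (simp add: algebra_simps)
    next
      case False
      then have "norm x > R" by simp
      from k2[OF this] have "p x * (k x * norm x) \<le> p x * (kmin * (R / 8) * exp ((norm x)\<^sup>2 / \<tau>\<^sup>2))"
        using pn[of x] by (intro mult_left_mono) auto
      then have "p x * k x * norm x \<le> kmin * R * ((1/8) * pe x)" unfolding pe_def by (simp add: mult_ac)
      moreover have "R * (p x * k x) \<ge> 0" using R pn[of x] kn[of x] by simp
      ultimately show ?thesis using B by (simp add: algebra_simps)
    qed
  qed
  have ipe: "integrable lborel pe" using peint unfolding pe_def by simp
  have Epe: "(LINT x|lborel. pe x) \<le> 2" using pe2 unfolding pe_def by simp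
  have "(LINT x|lborel. p x * k x * norm x - R * (p x * k x)) \<le> (LINT x|lborel. kmin * R * (- (1/2) * p x + (1/2) * (c * pe x) + (1/8) * pe x))"
    by (rule integral_mono) (use pw pkn pk pint ipe in auto)
  also have "\<dots> = kmin * R * (- (1/2) * (LINT x|lborel. p x) + (1/2) * c * (LINT x|lborel. pe x) + (1/8) * (LINT x|lborel. pe x))"
    using pint ipe by (simp add: algebra_simps)
  also have "\<dots> \<le> kmin * R * (- (1/2) + (1/2) * (1/4) * 2 + (1/8) * 2)"
  proof (intro mult_left_mono)
    have "(1/2) * c * (LINT x|lborel. pe x) \<le> (1/2) * (1/4) * 2"
      using c0 Epe by (intro mult_mono) (auto intro!: integral_nonneg_AE simp: pen)
    then show "- (1/2) * (LINT x|lborel. p x) + (1/2) * c * (LINT x|lborel. pe x) + (1/8) * (LINT x|lborel. pe x) \<le> - (1/2) + (1/2) * (1/4) * 2 + (1/8) * 2"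
      using p1 Epe by simp
  qed (use km R in auto)
  also have "\<dots> = 0" by simp
  finally have "(LINT x|lborel. p x * k x * norm x - R * (p x * k x)) \<le> 0" .
  then show "(LINT x|lborel. p x * k x * norm x) \<le> R * (LINT x|lborel. p x * k x)"
    using pkn pk by simp
  have pw2: "p x * k x \<ge> kmin * (p x - c * pe x)" for x
  proof (cases "norm x \<le> R / 2")
    case True
    have "kmin * (p x - c * pe x) \<le> kmin * p x" using km c0 pen[of x] by (intro mult_left_mono) auto
    also have "\<dots> \<le> k x * p x" using k1[OF True] pn[of x] by (intro mult_right_mono) auto
    finally show ?thesis by (simp add: mult_ac)
  next
    case False
    then have "p x - c * pe x \<le> 0" using big[of x] by simp
    then have "kmin * (p x - c * pe x) \<le> 0" using km by (simp add: mult_nonneg_nonpos)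
    also have "0 \<le> p x * k x" using pn[of x] kn[of x] by simp
    finally show ?thesis .
  qed
  have I1: "(LINT x|lborel. kmin * (p x - c * pe x)) \<le> (LINT x|lborel. p x * k x)"
    by (rule integral_mono) (use pw2 pk pint ipe in auto)
  have I2: "(LINT x|lborel. kmin * (p x - c * pe x)) = kmin * (1 - c * (LINT x|lborel. pe x))"
    using pint ipe p1 by simp
  have I3: "c * (LINT x|lborel. pe x) \<le> (1/4) * 2"
    using c0 Epe by (intro mult_mono) (auto intro!: integral_nonneg_AE simp: pen)
  have I4: "kmin * (1/2) \<le> kmin * (1 - c * (LINT x|lborel. pe x))"
    using I3 km by (intro mult_left_mono) auto
  have I5: "kmin / 2 = kmin * (1/2)" by simp
  show "(LINT x|lborel. p x * k x) \<ge> kmin / 2" using I1 I4 unfolding I2 I5 by linarith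
qed

lemma exp_4s2: fixes s :: real assumes "s \<ge> 1" shows "8 * s \<le> exp (4 * s\<^sup>2)"
proof -
  have e: "exp (4 * s\<^sup>2) = (exp (2 * s\<^sup>2))\<^sup>2" by (simp add: exp_double[symmetric] power2_eq_square exp_add[symmetric])
  have "1 + 2 * s\<^sup>2 \<le> exp (2 * s\<^sup>2)" by (rule exp_ge_add_one_self)
  then have "(1 + 2 * s\<^sup>2)\<^sup>2 \<le> (exp (2 * s\<^sup>2))\<^sup>2" by (intro power_mono) (auto simp: add_nonneg_nonneg)
  moreover have "8 * s \<le> (1 + 2 * s\<^sup>2)\<^sup>2"
  proof -
    have s2: "s\<^sup>2 \<ge> 1" using assms by (simp add: one_le_power)
    have "8 * s \<le> 8 * s\<^sup>2" using assms by (simp add: power2_eq_square)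
    also have "\<dots> \<le> 4 * s\<^sup>2 * s\<^sup>2 + 4 * s\<^sup>2 + 1"
    proof -
      have "4 * s\<^sup>2 * 1 \<le> 4 * s\<^sup>2 * s\<^sup>2" using s2 by (intro mult_left_mono) auto
      then show ?thesis by linarith
    qed
    also have "\<dots> = (1 + 2 * s\<^sup>2)\<^sup>2" by (simp add: power2_eq_square algebra_simps)
    finally show ?thesis .
  qed
  ultimately show ?thesis unfolding e by linarith
qed

lemma kern_k1:
  fixes x y :: "'a::euclidean_space"
  assumes V: "V > 0" and a: "a \<ge> 0" and x: "norm x \<le> R / 2"
  shows "kern V a y x \<ge> (2 * pi * V) powr (- real DIM('a) / 2) * exp (- ((norm y + a * R / 2)\<^sup>2) / (2 * V))"
proof -
  have "norm (y - a *\<^sub>R x) \<le> norm y + norm (a *\<^sub>R x)" by (rule norm_triangle_ineq4)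
  also have "norm (a *\<^sub>R x) = a * norm x" using a by simp
  also have "a * norm x \<le> a * (R / 2)" using a x by (intro mult_left_mono) auto
  finally have "norm (y - a *\<^sub>R x) \<le> norm y + a * R / 2" by simp
  then have "(norm (y - a *\<^sub>R x))\<^sup>2 \<le> (norm y + a * R / 2)\<^sup>2" by (intro power_mono) auto
  then have "- ((norm y + a * R / 2)\<^sup>2) / (2 * V) \<le> - ((norm (y - a *\<^sub>R x))\<^sup>2) / (2 * V)"
    using V by (intro divide_right_mono) auto
  then show ?thesis unfolding kern_def by (intro mult_left_mono) auto
qed

lemma kern_k2:
  fixes x y :: "'a::euclidean_space"
  assumes V: "V > 0" and a: "a \<ge> 0" and \<tau>: "\<tau> > 0" and R: "R > 0" and x: "norm x > R"
    and cond: "4 / R\<^sup>2 + (3 * a * norm y / R + a\<^sup>2 / 4) / (2 * V) \<le> 1 / \<tau>\<^sup>2"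
  shows "kern V a y x * norm x \<le> ((2 * pi * V) powr (- real DIM('a) / 2) * exp (- ((norm y + a * R / 2)\<^sup>2) / (2 * V))) * (R / 8) * exp ((norm x)\<^sup>2 / \<tau>\<^sup>2)"
proof -
  define c0 where "c0 = (2 * pi * V) powr (- real DIM('a) / 2)"
  define r where "r = norm x"
  define n where "n = norm y"
  have r: "r > R" "r > 0" using x R by (auto simp: r_def)
  have n0: "n \<ge> 0" by (simp add: n_def)
  have s1: "(norm (y - a *\<^sub>R x))\<^sup>2 \<ge> n\<^sup>2 - 2 * a * n * r"
  proof -
    have "(norm (y - a *\<^sub>R x))\<^sup>2 = n\<^sup>2 - 2 * a * (y \<bullet> x) + a\<^sup>2 * r\<^sup>2"
      unfolding n_def r_def power2_norm_eq_inner by (simp add: inner_diff_left inner_diff_right inner_commute power2_eq_square algebra_simps)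
    moreover have "y \<bullet> x \<le> n * r" unfolding n_def r_def by (rule norm_cauchy_schwarz)
    then have "2 * a * (y \<bullet> x) \<le> 2 * a * (n * r)" using a by (intro mult_left_mono) auto
    then have "2 * a * (y \<bullet> x) \<le> 2 * a * n * r" by (simp add: mult.assoc)
    moreover have "a\<^sup>2 * r\<^sup>2 \<ge> 0" by simp
    ultimately show ?thesis by linarith
  qed
  define Z where "Z = (a * n * R + a\<^sup>2 * R\<^sup>2 / 4 + 2 * a * n * r) / (2 * V)"
  have s3: "(- n\<^sup>2 + 2 * a * n * r) / (2 * V) = - ((n + a * R / 2)\<^sup>2) / (2 * V) + Z"
    unfolding Z_def using V by (simp add: field_simps power2_eq_square)
  have s2: "kern V a y x \<le> c0 * exp ((- n\<^sup>2 + 2 * a * n * r) / (2 * V))"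
  proof -
    have "- ((norm (y - a *\<^sub>R x))\<^sup>2) / (2 * V) \<le> (- n\<^sup>2 + 2 * a * n * r) / (2 * V)"
      using s1 V by (intro divide_right_mono) auto
    then show ?thesis unfolding kern_def c0_def by (intro mult_left_mono) auto
  qed
  have s4: "Z \<le> r\<^sup>2 * ((3 * a * n / R + a\<^sup>2 / 4) / (2 * V))"
  proof -
    have rr: "r \<le> r\<^sup>2 / R" using r R by (simp add: field_simps power2_eq_square)
    have an: "a * n \<ge> 0" using a n0 by simp
    have t1: "a * n * R \<le> a * n * (r\<^sup>2 / R)" using an rr r by (intro mult_left_mono) auto
    have t2: "a\<^sup>2 * R\<^sup>2 / 4 \<le> a\<^sup>2 * r\<^sup>2 / 4"
      using r R by (intro divide_right_mono mult_left_mono power_mono) auto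
    have t3: "2 * a * n * r \<le> 2 * a * n * (r\<^sup>2 / R)"
    proof -
      have "2 * (a * n) * r \<le> 2 * (a * n) * (r\<^sup>2 / R)" using an rr by (intro mult_left_mono) auto
      then show ?thesis by (simp add: mult.assoc)
    qed
    have "a * n * R + a\<^sup>2 * R\<^sup>2 / 4 + 2 * a * n * r \<le> a * n * (r\<^sup>2 / R) + a\<^sup>2 * r\<^sup>2 / 4 + 2 * a * n * (r\<^sup>2 / R)"
      using t1 t2 t3 by linarith
    also have "\<dots> = r\<^sup>2 * (3 * a * n / R + a\<^sup>2 / 4)" by (simp add: field_simps)
    finally have "a * n * R + a\<^sup>2 * R\<^sup>2 / 4 + 2 * a * n * r \<le> r\<^sup>2 * (3 * a * n / R + a\<^sup>2 / 4)" .
    then show ?thesis unfolding Z_def using V by (simp add: divide_right_mono)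
  qed
  have s5: "8 * r \<le> R * exp (4 * r\<^sup>2 / R\<^sup>2)"
  proof -
    have "8 * (r / R) \<le> exp (4 * (r / R)\<^sup>2)" using r R by (intro exp_4s2) simp
    then have "R * (8 * (r / R)) \<le> R * exp (4 * (r / R)\<^sup>2)" using R by (intro mult_left_mono) auto
    then show ?thesis using R by (simp add: power_divide)
  qed
  have s6: "4 * r\<^sup>2 / R\<^sup>2 + Z \<le> r\<^sup>2 / \<tau>\<^sup>2"
  proof -
    have "4 * r\<^sup>2 / R\<^sup>2 + Z \<le> r\<^sup>2 * (4 / R\<^sup>2 + (3 * a * n / R + a\<^sup>2 / 4) / (2 * V))"
      using s4 by (simp add: algebra_simps)
    also have "\<dots> \<le> r\<^sup>2 * (1 / \<tau>\<^sup>2)" using cond unfolding n_def by (intro mult_left_mono) auto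
    finally show ?thesis by simp
  qed
  define K where "K = c0 * exp (- ((n + a * R / 2)\<^sup>2) / (2 * V))"
  have K0: "K \<ge> 0" unfolding K_def c0_def by simp
  have "kern V a y x * r \<le> c0 * exp ((- n\<^sup>2 + 2 * a * n * r) / (2 * V)) * r"
    using s2 r by (intro mult_right_mono) auto
  also have "\<dots> = K * (exp Z * r)" unfolding s3 K_def exp_add by (simp only: mult_ac)
  also have "\<dots> \<le> K * ((R / 8) * exp (r\<^sup>2 / \<tau>\<^sup>2))"
  proof (intro mult_left_mono K0)
    have "exp Z * (8 * r) \<le> exp Z * (R * exp (4 * r\<^sup>2 / R\<^sup>2))" using s5 by (intro mult_left_mono) auto
    also have "\<dots> = R * exp (4 * r\<^sup>2 / R\<^sup>2 + Z)" by (simp add: exp_add)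
    also have "\<dots> \<le> R * exp (r\<^sup>2 / \<tau>\<^sup>2)" using s6 R by (intro mult_left_mono) auto
    finally show "exp Z * r \<le> (R / 8) * exp (r\<^sup>2 / \<tau>\<^sup>2)" by simp
  qed
  finally show ?thesis unfolding K_def c0_def r_def n_def by (simp add: mult_ac)
qed

lemma params:
  fixes d P \<tau> \<delta> a V n :: real
  assumes d: "d \<ge> 1" and P: "P \<ge> 1" "\<tau> \<le> P" and \<tau>: "\<tau> > 0" and \<delta>: "0 < \<delta>" "\<delta> < 1"
    and a: "0 < a" "a \<le> \<delta> / (16 * d * P)" and V: "V = 1 - a\<^sup>2" and n: "n \<ge> 0"
  defines "R \<equiv> V * (\<delta> / (2 * d) * (1 + n)) / a - a * n"
  shows "R \<ge> 7 * P * (1 + n)" "V \<ge> 1/2" "V \<le> 1" "a \<le> 1/16" "a * P \<le> 1/16"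
    and "exp (- R\<^sup>2 / (4 * \<tau>\<^sup>2)) \<le> 1/4"
    and "4 / R\<^sup>2 + (3 * a * n / R + a\<^sup>2 / 4) / (2 * V) \<le> 1 / \<tau>\<^sup>2"
proof -
  have aP16: "a * (16 * d * P) \<le> \<delta>" using a d P by (simp add: field_simps)
  show aP: "a * P \<le> 1/16"
  proof -
    have "a * P * 16 * 1 \<le> a * P * 16 * d" using a P d by (intro mult_left_mono) auto
    also have "\<dots> = a * (16 * d * P)" by (simp add: mult_ac)
    also have "\<dots> \<le> 1" using aP16 \<delta> by simp
    finally show ?thesis by simp
  qed
  show a16: "a \<le> 1/16"
  proof -
    have "a * 1 \<le> a * P" using a P by (intro mult_left_mono) auto
    then show ?thesis using aP by simp
  qed
  have a2: "a\<^sup>2 \<le> 1/256"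
  proof -
    have "a\<^sup>2 \<le> (1/16)\<^sup>2" using a a16 by (intro power_mono) auto
    then show ?thesis by (simp add: power2_eq_square)
  qed
  show V1: "V \<ge> 1/2" using a2 V by simp
  have V2: "V \<ge> 255/256" using a2 V by simp
  show "V \<le> 1" using V by simp
  have l: "\<delta> / (2 * d) * (1 + n) \<ge> 8 * a * P * (1 + n)"
  proof -
    have "8 * a * P = a * (16 * d * P) / (2 * d)" using d by (simp add: field_simps)
    also have "\<dots> \<le> \<delta> / (2 * d)" using aP16 d by (intro divide_right_mono) auto
    finally show ?thesis using n by (intro mult_right_mono) auto
  qed
  have "V * (\<delta> / (2 * d) * (1 + n)) / a \<ge> V * (8 * a * P * (1 + n)) / a"
    using l V1 a by (intro divide_right_mono mult_left_mono) auto
  also have "V * (8 * a * P * (1 + n)) / a = 8 * V * P * (1 + n)" using a by (simp add: field_simps)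
  finally have R1: "V * (\<delta> / (2 * d) * (1 + n)) / a \<ge> 8 * V * P * (1 + n)" .
  have "8 * V * P * (1 + n) \<ge> 8 * (255/256) * P * (1 + n)"
    using V2 P n by (intro mult_right_mono) auto
  moreover have "a * n \<le> (1/16) * (P * (1 + n))"
  proof -
    have "a * n \<le> (1/16) * n" using a16 n by (intro mult_right_mono) auto
    also have "\<dots> \<le> (1/16) * (P * (1 + n))"
    proof -
      have "n \<le> 1 * (1 + n)" by simp
      also have "\<dots> \<le> P * (1 + n)" using P n by (intro mult_right_mono) auto
      finally show ?thesis by simp
    qed
    finally show ?thesis .
  qed
  ultimately have "R \<ge> 8 * (255/256) * P * (1 + n) - (1/16) * (P * (1 + n))" unfolding R_def using R1 by linarith
  moreover have "8 * (255/256) * P * (1 + n) - (1/16) * (P * (1 + n)) \<ge> 7 * P * (1 + n)"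
    using P n by (simp add: algebra_simps)
  ultimately show R7: "R \<ge> 7 * P * (1 + n)" by linarith
  have Pn: "P * (1 + n) \<ge> P" using P n by (simp add: algebra_simps)
  have R7P: "R \<ge> 7 * P" using R7 Pn by linarith
  have R0: "R > 0" using R7P P by linarith
  have R2: "R\<^sup>2 \<ge> 49 * P\<^sup>2"
  proof -
    have "(7 * P)\<^sup>2 \<le> R\<^sup>2" using R7P P by (intro power_mono) auto
    then show ?thesis by (simp add: power_mult_distrib)
  qed
  have P2: "P\<^sup>2 \<ge> \<tau>\<^sup>2" using P \<tau> by (intro power_mono) auto
  show "exp (- R\<^sup>2 / (4 * \<tau>\<^sup>2)) \<le> 1/4"
  proof -
    have "R\<^sup>2 \<ge> 12 * \<tau>\<^sup>2" using R2 P2 zero_le_power2[of \<tau>] by linarith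
    then have "R\<^sup>2 / (4 * \<tau>\<^sup>2) \<ge> 3" using \<tau> by (simp add: field_simps)
    then have "- R\<^sup>2 / (4 * \<tau>\<^sup>2) \<le> -3" by simp
    then have "exp (- R\<^sup>2 / (4 * \<tau>\<^sup>2)) \<le> exp (-3)" by simp
    also have "exp (-3::real) \<le> 1/4"
    proof -
      have "4 \<le> exp (3::real)" using exp_ge_add_one_self[of 3] by simp
      then show ?thesis by (simp add: exp_minus field_simps)
    qed
    finally show ?thesis .
  qed
  have c1: "4 / R\<^sup>2 \<le> 4 / (49 * P\<^sup>2)" using R2 P R0 by (intro divide_left_mono) auto
  have c2: "3 * a * n / R \<le> 3 / (112 * P\<^sup>2)"
  proof -
    have "a * n \<le> a * (1 + n)" using a by simp
    have "3 * a * n / R \<le> 3 * a * (1 + n) / (7 * P * (1 + n))"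
      using R7 a n P by (intro frac_le mult_left_mono) auto
    also have "\<dots> = 3 * a / (7 * P)" by (rule nonzero_mult_divide_mult_cancel_right) (use n in simp)
    also have "\<dots> = 3 * (a * P) / (7 * P\<^sup>2)" using P by (simp add: field_simps power2_eq_square)
    also have "\<dots> \<le> 3 * (1/16) / (7 * P\<^sup>2)" using aP P by (intro divide_right_mono mult_left_mono) auto
    also have "\<dots> = 3 / (112 * P\<^sup>2)" by simp
    finally show ?thesis .
  qed
  have c3: "a\<^sup>2 / 4 \<le> 1 / (1024 * P\<^sup>2)"
  proof -
    have "(a * P)\<^sup>2 \<le> (1/16)\<^sup>2" using aP a P by (intro power_mono) auto
    moreover have "(1/16::real)\<^sup>2 = 1/256" by (simp add: power2_eq_square)
    ultimately have "a\<^sup>2 * P\<^sup>2 \<le> 1/256" by (simp only: power_mult_distrib)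
    then show ?thesis using P by (simp add: field_simps)
  qed
  have c4: "(3 * a * n / R + a\<^sup>2 / 4) / (2 * V) \<le> 3 * a * n / R + a\<^sup>2 / 4"
  proof -
    have "0 \<le> 3 * a * n / R + a\<^sup>2 / 4" using a n R0 by simp
    moreover have "2 * V \<ge> 1" using V1 by simp
    ultimately have "(3 * a * n / R + a\<^sup>2 / 4) / (2 * V) \<le> (3 * a * n / R + a\<^sup>2 / 4) / 1"
      by (intro divide_left_mono) auto
    then show ?thesis by simp
  qed
  have "4 / R\<^sup>2 + (3 * a * n / R + a\<^sup>2 / 4) / (2 * V) \<le> 4 / (49 * P\<^sup>2) + 3 / (112 * P\<^sup>2) + 1 / (1024 * P\<^sup>2)"
    using c1 c2 c3 c4 by linarith
  also have "\<dots> \<le> 1 / P\<^sup>2" using P by (simp add: field_simps)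
  also have "\<dots> \<le> 1 / \<tau>\<^sup>2" using P2 \<tau> P by (intro divide_left_mono) auto
  finally show "4 / R\<^sup>2 + (3 * a * n / R + a\<^sup>2 / 4) / (2 * V) \<le> 1 / \<tau>\<^sup>2" .
qed

lemma s_le_exp_s2: fixes s :: real shows "s \<le> exp (s\<^sup>2)"
proof -
  have "0 \<le> (s - 1)\<^sup>2" by simp
  then have "s \<le> 1 + s\<^sup>2" by (simp add: power2_diff) (smt (verit) zero_le_power2)
  also have "\<dots> \<le> exp (s\<^sup>2)" by (rule exp_ge_add_one_self)
  finally show ?thesis .
qed

lemma norm_le_tau_exp: fixes x :: "'a::real_normed_vector" assumes \<tau>: "\<tau> > 0"
  shows "norm x \<le> \<tau> * exp ((norm x)\<^sup>2 / \<tau>\<^sup>2)"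
proof -
  have "norm x / \<tau> \<le> exp ((norm x / \<tau>)\<^sup>2)" by (rule s_le_exp_s2)
  then show ?thesis using \<tau> by (simp add: power_divide field_simps)
qed

lemma grad_core:
  fixes p :: "real^'d \<Rightarrow> real" and y :: "real^'d"
  assumes pm: "p \<in> borel_measurable borel" and pn: "\<And>x. p x \<ge> 0" and pint: "integrable lborel p"
    and p1: "(LINT x|lborel. p x) = 1"
    and peint: "integrable lborel (\<lambda>x. p x * exp ((norm x)\<^sup>2 / \<tau>\<^sup>2))"
    and pe2: "(LINT x|lborel. p x * exp ((norm x)\<^sup>2 / \<tau>\<^sup>2)) \<le> 2" and \<tau>: "\<tau> > 0"
    and P: "P \<ge> 1" "\<tau> \<le> P" and \<delta>: "0 < \<delta>" "\<delta> < 1"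
    and a: "0 < a" "a \<le> \<delta> / (16 * real CARD('d) * P)" and V: "V = 1 - a\<^sup>2"
  shows "qf p V a y > 0"
    and "\<bar>Dq p V a y (axis i 1) + y $ i * qf p V a y\<bar> \<le> \<delta> / (2 * real CARD('d)) * (1 + norm y) * qf p V a y"
proof -
  define d where "d = real CARD('d)"
  have d: "d \<ge> 1" unfolding d_def by simp
  define ell where "ell = \<delta> / (2 * d) * (1 + norm y)"
  define R where "R = V * ell / a - a * norm y"
  note prm = params[OF d P \<tau> \<delta> a[unfolded d_def[symmetric]] V norm_ge_zero[of y], folded ell_def, folded R_def]
  have V0: "V > 0" using prm(2) by simp
  have R0: "R > 0" using prm(1) P by (smt (verit) mult_pos_pos norm_ge_zero)
  define c0 where "c0 = (2 * pi * V) powr (- real DIM(real^'d) / 2)"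
  define kmin where "kmin = c0 * exp (- ((norm y + a * R / 2)\<^sup>2) / (2 * V))"
  have km: "kmin > 0" unfolding kmin_def c0_def using V0 by simp
  have pml: "p \<in> borel_measurable lborel" using pm by measurable
  have ik: "integrable lborel (\<lambda>x. p x * kern V a y x)" by (rule integrable_p_kern[OF pm pint V0])
  have ikn: "integrable lborel (\<lambda>x. p x * kern V a y x * norm x)"
  proof (rule Bochner_Integration.integrable_bound[where f="\<lambda>x. c0 * \<tau> * (p x * exp ((norm x)\<^sup>2 / \<tau>\<^sup>2))"])
    show "integrable lborel (\<lambda>x. c0 * \<tau> * (p x * exp ((norm x)\<^sup>2 / \<tau>\<^sup>2)))" using peint by simp
    show "(\<lambda>x. p x * kern V a y x * norm x) \<in> borel_measurable lborel" using pml by measurable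
    show "AE x in lborel. norm (p x * kern V a y x * norm x) \<le> norm (c0 * \<tau> * (p x * exp ((norm x)\<^sup>2 / \<tau>\<^sup>2)))"
    proof (rule AE_I2)
      fix x :: "real^'d"
      have "kern V a y x * norm x \<le> c0 * (\<tau> * exp ((norm x)\<^sup>2 / \<tau>\<^sup>2))"
        using kern_le[OF V0, of a y x] norm_le_tau_exp[OF \<tau>, of x] kern_nonneg[of V a y x]
        unfolding c0_def by (intro mult_mono) auto
      then have "p x * (kern V a y x * norm x) \<le> p x * (c0 * (\<tau> * exp ((norm x)\<^sup>2 / \<tau>\<^sup>2)))"
        using pn[of x] by (intro mult_left_mono) auto
      moreover have "0 \<le> p x * kern V a y x * norm x" using pn[of x] kern_nonneg[of V a y x] by simp
      moreover have "0 \<le> c0 * \<tau> * (p x * exp ((norm x)\<^sup>2 / \<tau>\<^sup>2))" using pn[of x] \<tau> by (simp add: c0_def)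
      ultimately show "norm (p x * kern V a y x * norm x) \<le> norm (c0 * \<tau> * (p x * exp ((norm x)\<^sup>2 / \<tau>\<^sup>2)))"
        by (simp add: mult_ac)
    qed
  qed
  have k1: "kern V a y x \<ge> kmin" if "norm x \<le> R / 2" for x
    unfolding kmin_def c0_def using kern_k1[OF V0 _ that, of a y] a by simp
  have k2: "kern V a y x * norm x \<le> kmin * (R / 8) * exp ((norm x)\<^sup>2 / \<tau>\<^sup>2)" if "norm x > R" for x
    unfolding kmin_def c0_def using kern_k2[OF V0 _ \<tau> R0 that prm(7)] a by simp
  note EM = E_main[OF pml pn pint p1 peint pe2 R0 prm(6) \<tau> km kern_nonneg k1 k2 ik ikn]
  show qpos: "qf p V a y > 0" unfolding qf_def using EM(2) km by simp
  define q where "q = qf p V a y"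
  have iy: "integrable lborel (\<lambda>x. y $ i * (p x * kern V a y x))" using ik by simp
  have "Dq p V a y (axis i 1) + y $ i * q
      = (LINT x|lborel. p x * (kern V a y x * (- ((y - a *\<^sub>R x) \<bullet> axis i 1) / V)) + y $ i * (p x * kern V a y x))"
    unfolding Dq_def q_def qf_def
    by (subst Bochner_Integration.integral_add[OF integrable_Dq[OF pm pint V0] iy]) simp
  also have "\<dots> = (LINT x|lborel. (a / V) * (p x * kern V a y x * (x $ i - a * y $ i)))"
  proof (intro Bochner_Integration.integral_cong refl)
    fix x :: "real^'d"
    have ax: "(y - a *\<^sub>R x) \<bullet> axis i 1 = y $ i - a * x $ i" by (simp add: inner_axis)
    have Va: "V \<noteq> 0" "1 - V = a\<^sup>2" using V0 V by auto
    show "p x * (kern V a y x * (- ((y - a *\<^sub>R x) \<bullet> axis i 1) / V)) + y $ i * (p x * kern V a y x)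
        = (a / V) * (p x * kern V a y x * (x $ i - a * y $ i))"
    proof -
      define Z where "Z = p x * kern V a y x"
      have "p x * (kern V a y x * (- (y $ i - a * x $ i) / V)) + y $ i * (p x * kern V a y x)
          = Z * ((- (y $ i - a * x $ i) + V * y $ i) / V)" unfolding Z_def using Va by (simp add: field_simps)
      also have "- (y $ i - a * x $ i) + V * y $ i = a * (x $ i - a * y $ i)" unfolding V
        by (simp add: algebra_simps power2_eq_square)
      finally show ?thesis unfolding ax Z_def by (simp add: mult_ac)
    qed
  qed
  finally have eqD: "Dq p V a y (axis i 1) + y $ i * q = (LINT x|lborel. (a / V) * (p x * kern V a y x * (x $ i - a * y $ i)))" .
  have "\<bar>LINT x|lborel. (a / V) * (p x * kern V a y x * (x $ i - a * y $ i))\<bar>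
      \<le> (LINT x|lborel. (a / V) * (p x * kern V a y x * norm x + a * norm y * (p x * kern V a y x)))"
  proof (rule integral_abs_bound_integral)
    show "integrable lborel (\<lambda>x. (a / V) * (p x * kern V a y x * (x $ i - a * y $ i)))"
    proof -
      have "(\<lambda>x. (a / V) * (p x * kern V a y x * (x $ i - a * y $ i))) = (\<lambda>x. (a / V) * (p x * kern V a y x * x $ i) - (a / V) * (a * y $ i) * (p x * kern V a y x))"
        by (intro ext) (simp add: algebra_simps)
      moreover have "integrable lborel (\<lambda>x. p x * kern V a y x * x $ i)"
      proof (rule Bochner_Integration.integrable_bound[OF ikn])
        show "(\<lambda>x. p x * kern V a y x * x $ i) \<in> borel_measurable lborel" using pml by measurable
        show "AE x in lborel. norm (p x * kern V a y x * x $ i) \<le> norm (p x * kern V a y x * norm x)"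
        proof (rule AE_I2)
          fix x :: "real^'d"
          have "p x * kern V a y x * \<bar>x $ i\<bar> \<le> p x * kern V a y x * norm x"
            using pn[of x] kern_nonneg[of V a y x] component_le_norm_cart[of x i] by (intro mult_left_mono) auto
          then show "norm (p x * kern V a y x * x $ i) \<le> norm (p x * kern V a y x * norm x)"
            using pn[of x] kern_nonneg[of V a y x] by (simp add: abs_mult)
        qed
      qed
      ultimately show ?thesis using ik by simp
    qed
    show "integrable lborel (\<lambda>x. (a / V) * (p x * kern V a y x * norm x + a * norm y * (p x * kern V a y x)))"
      using ik ikn by simp
    fix x :: "real^'d"
    have "\<bar>x $ i - a * y $ i\<bar> \<le> norm x + a * norm y"
    proof -
      have "\<bar>x $ i - a * y $ i\<bar> \<le> \<bar>x $ i\<bar> + a * \<bar>y $ i\<bar>"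
        using abs_triangle_ineq4[of "x $ i" "a * y $ i"] a by (simp add: abs_mult)
      also have "\<dots> \<le> norm x + a * norm y"
        using component_le_norm_cart[of x i] component_le_norm_cart[of y i] a by (intro add_mono mult_left_mono) auto
      finally show ?thesis .
    qed
    moreover define W where "W = (a / V) * (p x * kern V a y x)"
    moreover have W0: "W \<ge> 0" unfolding W_def using a V0 pn[of x] kern_nonneg[of V a y x] by simp
    ultimately have "W * \<bar>x $ i - a * y $ i\<bar> \<le> W * (norm x + a * norm y)"
      by (intro mult_left_mono) auto
    moreover have "\<bar>(a / V) * (p x * kern V a y x * (x $ i - a * y $ i))\<bar> = W * \<bar>x $ i - a * y $ i\<bar>"
    proof -
      have "(a / V) * (p x * kern V a y x * (x $ i - a * y $ i)) = W * (x $ i - a * y $ i)"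
        unfolding W_def by (simp add: mult_ac)
      then show ?thesis using W0 by (simp add: abs_mult)
    qed
    moreover have "(a / V) * (p x * kern V a y x * norm x + a * norm y * (p x * kern V a y x)) = W * (norm x + a * norm y)"
      unfolding W_def by (simp add: algebra_simps add_divide_distrib)
    ultimately show "\<bar>(a / V) * (p x * kern V a y x * (x $ i - a * y $ i))\<bar> \<le> (a / V) * (p x * kern V a y x * norm x + a * norm y * (p x * kern V a y x))"
      by simp
  qed
  also have "\<dots> = (a / V) * ((LINT x|lborel. p x * kern V a y x * norm x) + a * norm y * q)"
    using ik ikn unfolding q_def qf_def by simp
  also have "\<dots> \<le> (a / V) * (R * q + a * norm y * q)"
    using EM(1) a V0 unfolding q_def qf_def by (intro mult_left_mono add_right_mono) auto
  also have "\<dots> = ell * q" unfolding R_def using a V0 by (simp add: field_simps)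
  finally show "\<bar>Dq p V a y (axis i 1) + y $ i * qf p V a y\<bar> \<le> \<delta> / (2 * real CARD('d)) * (1 + norm y) * qf p V a y"
    unfolding eqD[unfolded q_def] ell_def d_def q_def .
qed

lemma norm_sq_vec: "(norm (v::real^'n))\<^sup>2 = (\<Sum>i\<in>UNIV. (v $ i)\<^sup>2)"
  unfolding power2_norm_eq_inner inner_vec_def by (simp add: power2_eq_square)

lemma clip_bound:
  fixes g y :: "real^'n" and s :: "real^'n \<Rightarrow> real^'n"
  assumes \<delta>: "\<delta> > 0"
    and gb: "\<And>i. \<bar>g $ i + y $ i\<bar> \<le> \<delta> / (2 * real CARD('n)) * (1 + norm y)"
  shows "(norm (g - clip_score \<delta> s y))\<^sup>2 \<le> (norm (g - s y))\<^sup>2"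
    and "(norm (g - clip_score \<delta> s y))\<^sup>2 \<le> \<delta>\<^sup>2 * (1 + norm y)\<^sup>2 / real CARD('n)"
proof -
  define l where "l = \<delta> / (2 * real CARD('n)) * (1 + norm y)"
  have l0: "l \<ge> 0" unfolding l_def using \<delta> by (simp add: add_nonneg_nonneg)
  define c where "c = clip_score \<delta> s y"
  have ci: "c $ i = (if \<bar>- (y$i) - (s y)$i\<bar> \<le> l then (s y)$i
           else if (s y)$i < - (y$i) - l then - (y$i) - l else - (y$i) + l)" for i
    unfolding c_def clip_score_def l_def Let_def by simp
  have comp: "\<bar>g $ i - c $ i\<bar> \<le> \<bar>g $ i - s y $ i\<bar> \<and> \<bar>g $ i - c $ i\<bar> \<le> 2 * l" for i
  proof -
    have g1: "g $ i \<ge> - (y $ i) - l" "g $ i \<le> - (y $ i) + l" using gb[of i] unfolding l_def[symmetric] by (auto simp: abs_le_iff)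
    show ?thesis
    proof (cases "\<bar>- (y$i) - (s y)$i\<bar> \<le> l")
      case True
      then show ?thesis using g1 unfolding ci by (auto simp: abs_le_iff)
    next
      case F1: False
      show ?thesis
      proof (cases "(s y)$i < - (y$i) - l")
        case True
        then show ?thesis using F1 g1 l0 unfolding ci by (auto simp: abs_le_iff)
      next
        case False
        then show ?thesis using F1 g1 l0 unfolding ci by (auto simp: abs_le_iff)
      qed
    qed
  qed
  have "(norm (g - c))\<^sup>2 = (\<Sum>i\<in>UNIV. (g $ i - c $ i)\<^sup>2)" by (simp add: norm_sq_vec)
  also have "\<dots> \<le> (\<Sum>i\<in>UNIV. (g $ i - s y $ i)\<^sup>2)"
    using comp by (intro sum_mono) (simp add: abs_le_square_iff[symmetric])
  also have "\<dots> = (norm (g - s y))\<^sup>2" by (simp add: norm_sq_vec)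
  finally show "(norm (g - clip_score \<delta> s y))\<^sup>2 \<le> (norm (g - s y))\<^sup>2" unfolding c_def .
  have "(norm (g - c))\<^sup>2 = (\<Sum>i\<in>UNIV. (g $ i - c $ i)\<^sup>2)" by (simp add: norm_sq_vec)
  also have "\<dots> \<le> (\<Sum>i\<in>(UNIV::'n set). (2 * l)\<^sup>2)"
  proof (intro sum_mono)
    fix i
    have "\<bar>g $ i - c $ i\<bar> \<le> \<bar>2 * l\<bar>" using comp[of i] l0 by simp
    then show "(g $ i - c $ i)\<^sup>2 \<le> (2 * l)\<^sup>2" by (simp only: abs_le_square_iff)
  qed
  also have "\<dots> = real CARD('n) * (2 * l)\<^sup>2" by simp
  also have "\<dots> = \<delta>\<^sup>2 * (1 + norm y)\<^sup>2 / real CARD('n)" unfolding l_def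
    by (simp add: power_mult_distrib power_divide field_simps power2_eq_square)
  finally show "(norm (g - clip_score \<delta> s y))\<^sup>2 \<le> \<delta>\<^sup>2 * (1 + norm y)\<^sup>2 / real CARD('n)" unfolding c_def .
qed

lemma exp_minus1_le: fixes u :: real assumes "u \<ge> 0" shows "exp u \<le> 1 + u * exp u"
proof -
  have "1 - u \<le> exp (- u)" using exp_ge_add_one_self[of "-u"] by simp
  then have "(1 - u) * exp u \<le> exp (- u) * exp u" by (intro mult_right_mono) auto
  then show ?thesis by (simp add: exp_minus algebra_simps)
qed

lemma exp_split:
  fixes m A B \<beta> M :: real
  assumes m: "0 \<le> m" "m \<le> A" "m \<le> B" and \<beta>: "\<beta> > 0" and M: "M \<ge> 0"
  shows "exp (\<beta> * m) \<le> 1 + exp M * \<beta> * A + exp (2 * \<beta> * B - M)"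
proof (cases "\<beta> * B \<le> M")
  case True
  have u0: "\<beta> * m \<ge> 0" using m \<beta> by simp
  have uM: "\<beta> * m \<le> M" using True m \<beta> by (meson mult_left_mono less_imp_le order_trans)
  have uA: "\<beta> * m \<le> \<beta> * A" using m \<beta> by (intro mult_left_mono) auto
  have "exp (\<beta> * m) \<le> 1 + (\<beta> * m) * exp (\<beta> * m)" by (rule exp_minus1_le[OF u0])
  also have "(\<beta> * m) * exp (\<beta> * m) \<le> (\<beta> * A) * exp M"
    by (rule mult_mono) (use uM uA u0 in auto)
  finally have "exp (\<beta> * m) \<le> 1 + exp M * \<beta> * A" by (simp add: mult_ac)
  then show ?thesis using exp_gt_zero[of "2 * \<beta> * B - M"] by linarith
next
  case False
  have "\<beta> * m \<le> \<beta> * B" using m \<beta> by (intro mult_left_mono) auto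
  also have "\<dots> \<le> 2 * \<beta> * B - M" using False by (simp add: mult_ac)
  finally have e1: "exp (\<beta> * m) \<le> exp (2 * \<beta> * B - M)" by simp
  have e2: "0 \<le> exp M * \<beta> * A" using m \<beta> by simp
  show ?thesis using e1 e2 by linarith
qed

lemma exp_ninth: "exp (1/9 :: real) \<le> 9/8"
proof -
  have "1 - 1/9 \<le> exp (- (1/9::real))" using exp_ge_add_one_self[of "-(1/9)::real"] by simp
  then have "8/9 \<le> inverse (exp (1/9::real))" by (simp add: exp_minus)
  then show ?thesis by (simp add: field_simps)
qed

lemma powr_card_bound:
  fixes w :: real and n :: nat
  assumes n: "n \<ge> 1" and w1: "w \<le> 1" and w0: "w \<ge> 1 - 2 / (9 * real n)"
  shows "w powr (- real n / 2) \<le> 9/7"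
proof -
  have x: "-1 \<le> - 2 / (9 * real n)" using n by (simp add: field_simps)
  have "1 + real n * (- 2 / (9 * real n)) \<le> (1 + (- 2 / (9 * real n))) ^ n" by (rule Bernoulli_inequality[OF x])
  then have b: "7/9 \<le> (1 - 2 / (9 * real n)) ^ n" using n by simp
  have "2 / (9 * real n) \<le> 2 / 9" using n by (simp add: field_simps)
  then have wpos: "w > 0" using w0 by linarith
  have "(1 - 2 / (9 * real n)) ^ n \<le> w ^ n" using w0 n by (intro power_mono) (auto simp: field_simps)
  with b have z: "7/9 \<le> w ^ n" by simp
  have z1: "w ^ n \<le> 1" using w1 wpos by (simp add: power_le_one)
  have "w powr (- real n / 2) = (w ^ n) powr (-1/2)" using wpos by (simp add: powr_realpow[symmetric] powr_powr)
  also have "\<dots> \<le> (7/9) powr (-1/2)" using z by (intro powr_mono2') auto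
  also have "\<dots> = 1 / sqrt (7/9)" by (simp add: powr_minus_divide powr_half_sqrt)
  also have "\<dots> \<le> 9/7"
  proof -
    have "7/9 \<le> sqrt (7/9::real)" by (rule real_le_rsqrt) (simp add: power2_eq_square)
    then show ?thesis by (simp add: field_simps)
  qed
  finally show ?thesis .
qed

theorem theorem2:
  fixes p :: "real^'d \<Rightarrow> real"
    and s :: "real \<Rightarrow> real^'d \<Rightarrow> real^'d"
    and Ls :: "real \<Rightarrow> real"
    and T1 \<delta> \<epsilon> \<beta> :: real
  assumes p_meas: "p \<in> borel_measurable borel"
    and p_nonneg: "\<And>x. p x \<ge> 0"
    and p_prob: "(\<integral>\<^sup>+ x. ennreal (p x) \<partial>lborel) = 1"
    and subg: "norm_subgaussian p"
    and s_lip: "\<exists>C. C-lipschitz_on ({0..T1} \<times> UNIV) (\<lambda>(t, x). s t x)"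
    and Ls_onesided: "\<And>t x y. t \<in> {0..T1} \<Longrightarrow>
          (s t x - s t y) \<bullet> (x - y) \<le> Ls t * (norm (x - y))^2"
    and \<delta>_pos: "0 < \<delta>" and \<delta>_lt: "\<delta> < 1"
    and T1_ge: "T1 \<ge> ln (16 / \<delta> * real CARD('d) * (psi2_norm p + 1))"
    and \<epsilon>_pos: "0 < \<epsilon>" and \<epsilon>_lt: "\<epsilon> < 1"
    and \<beta>_pos: "0 < \<beta>" and \<beta>_le: "\<beta> \<le> 1 / (36 * \<delta>^2)"
    and b_small: "(\<integral>\<^sup>+ y. ennreal (ou_density p T1 y *
              (norm (grad (\<lambda>z. ln (ou_density p T1 z)) y - s T1 y))^2) \<partial>lborel)
          \<le> ennreal (1 / (550 * \<beta>) * \<epsilon> powr (2 + 36 * \<beta> * \<delta>^2))"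
  shows "(\<integral>\<^sup>+ y. ennreal (ou_density p T1 y *
              exp (\<beta> * (norm (grad (\<lambda>z. ln (ou_density p T1 z)) y
                              - clip_score \<delta> (s T1) y))^2)) \<partial>lborel)
         \<le> ennreal (exp \<epsilon>)"
proof -
  define d where "d = real CARD('d)"
  have d1: "d \<ge> 1" unfolding d_def by simp
  have pml: "p \<in> borel_measurable lborel" using p_meas by measurable
  have pint: "integrable lborel p"
    by (rule integrableI_nn_integral_finite[OF pml _, of 1]) (use p_nonneg p_prob in auto)
  have p1: "(LINT x|lborel. p x) = 1"
    using integral_eq_nn_integral[OF pml] p_nonneg p_prob by simp
  define S where "S = {t. t > 0 \<and> (\<integral>\<^sup>+ x. ennreal (p x * exp ((norm x)^2 / t^2)) \<partial>lborel) \<le> 2}"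
  have psiS: "psi2_norm p = Inf S" unfolding psi2_norm_def S_def ..
  have Sne: "S \<noteq> {}" using subg unfolding norm_subgaussian_def S_def by auto
  have psi0: "psi2_norm p \<ge> 0" unfolding psiS by (rule cInf_greatest[OF Sne]) (auto simp: S_def)
  obtain \<tau> where \<tau>S: "\<tau> \<in> S" and \<tau>lt: "\<tau> < psi2_norm p + 1/2"
    using cInf_lessD[OF Sne, of "psi2_norm p + 1/2"] unfolding psiS[symmetric] by auto
  have \<tau>: "\<tau> > 0" and NN: "(\<integral>\<^sup>+ x. ennreal (p x * exp ((norm x)^2 / \<tau>^2)) \<partial>lborel) \<le> 2"
    using \<tau>S unfolding S_def by auto
  define P where "P = psi2_norm p + 1"
  have P: "P \<ge> 1" "\<tau> \<le> P" using psi0 \<tau>lt unfolding P_def by auto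
  have pem: "(\<lambda>x. p x * exp ((norm x)\<^sup>2 / \<tau>\<^sup>2)) \<in> borel_measurable lborel" using pml by measurable
  have peint: "integrable lborel (\<lambda>x. p x * exp ((norm x)\<^sup>2 / \<tau>\<^sup>2))"
  proof (rule integrableI_bounded[OF pem])
    have "(\<integral>\<^sup>+ x. ennreal (norm (p x * exp ((norm x)\<^sup>2 / \<tau>\<^sup>2))) \<partial>lborel) = (\<integral>\<^sup>+ x. ennreal (p x * exp ((norm x)^2 / \<tau>^2)) \<partial>lborel)"
      using p_nonneg by (intro nn_integral_cong) simp
    also have "\<dots> < \<infinity>" using NN by (simp add: le_less_trans)
    finally show "(\<integral>\<^sup>+ x. ennreal (norm (p x * exp ((norm x)\<^sup>2 / \<tau>\<^sup>2))) \<partial>lborel) < \<infinity>" .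
  qed
  have pe2: "(LINT x|lborel. p x * exp ((norm x)\<^sup>2 / \<tau>\<^sup>2)) \<le> 2"
  proof -
    have "ennreal (LINT x|lborel. p x * exp ((norm x)\<^sup>2 / \<tau>\<^sup>2)) = (\<integral>\<^sup>+ x. ennreal (p x * exp ((norm x)^2 / \<tau>^2)) \<partial>lborel)"
      by (rule nn_integral_eq_integral[symmetric]) (use peint p_nonneg in auto)
    with NN have "ennreal (LINT x|lborel. p x * exp ((norm x)\<^sup>2 / \<tau>\<^sup>2)) \<le> ennreal 2" by simp
    then show ?thesis by (subst (asm) ennreal_le_iff) auto
  qed
  define a where "a = exp (- T1)"
  define V where "V = 1 - exp (-2*T1)"
  have a0: "a > 0" unfolding a_def by simp
  have VA: "V = 1 - a\<^sup>2" unfolding V_def a_def by (simp add: power2_eq_square exp_add[symmetric])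
  have aP: "a \<le> \<delta> / (16 * real CARD('d) * P)"
  proof -
    define X where "X = 16 / \<delta> * real CARD('d) * P"
    have X0: "X > 0" unfolding X_def using \<delta>_pos P by simp
    have "- T1 \<le> - ln X" using T1_ge unfolding X_def P_def by simp
    then have "a \<le> exp (- ln X)" unfolding a_def by simp
    also have "\<dots> = 1 / X" using X0 by (simp add: exp_minus inverse_eq_divide)
    also have "\<dots> = \<delta> / (16 * real CARD('d) * P)" unfolding X_def by simp
    finally show ?thesis .
  qed
  note prm = params[OF d1 P \<tau> \<delta>_pos \<delta>_lt a0 aP[folded d_def] VA norm_ge_zero]
  have V0: "V > 0" using prm(2) by simp
  have ou: "ou_density p T1 = qf p V a"
    by (intro ext) (simp add: ou_density_def qf_def kern_def V_def a_def Let_def)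
  note gc = grad_core[OF p_meas p_nonneg pint p1 peint pe2 \<tau> P \<delta>_pos \<delta>_lt a0 aP VA]
  have grad_eq: "grad (\<lambda>z. ln (qf p V a z)) y $ i = Dq p V a y (axis i 1) * inverse (qf p V a y)" for y i
  proof -
    have hd: "((\<lambda>z. ln (qf p V a z)) has_derivative (\<lambda>h. Dq p V a y h * inverse (qf p V a y))) (at y)"
      by (rule DERIV_compose_FDERIV[OF DERIV_ln[OF gc(1)] q_has_derivative[OF p_meas pint V0]])
    show ?thesis unfolding grad_def frechet_derivative_at[OF hd, symmetric] by simp
  qed
  have gb: "\<bar>grad (\<lambda>z. ln (qf p V a z)) y $ i + y $ i\<bar> \<le> \<delta> / (2 * real CARD('d)) * (1 + norm y)" for y i
  proof -
    have q0: "qf p V a y > 0" by (rule gc(1))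
    have "grad (\<lambda>z. ln (qf p V a z)) y $ i + y $ i = (Dq p V a y (axis i 1) + y $ i * qf p V a y) / qf p V a y"
      unfolding grad_eq using q0 by (simp add: field_simps)
    then have "\<bar>grad (\<lambda>z. ln (qf p V a z)) y $ i + y $ i\<bar> = \<bar>Dq p V a y (axis i 1) + y $ i * qf p V a y\<bar> / qf p V a y"
      using q0 by simp
    also have "\<dots> \<le> \<delta> / (2 * real CARD('d)) * (1 + norm y) * qf p V a y / qf p V a y"
      using gc(2)[of y i] q0 by (intro divide_right_mono) auto
    also have "\<dots> = \<delta> / (2 * real CARD('d)) * (1 + norm y)" using q0 by simp
    finally show ?thesis .
  qed
  define Q where "Q = qf p V a"
  have Q0: "Q y > 0" for y unfolding Q_def by (rule gc(1))
  have Qm: "Q \<in> borel_measurable lborel"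
  proof -
    have "(\<lambda>(y, x). p x * kern V a (y::real^'d) x) \<in> borel_measurable (lborel \<Otimes>\<^sub>M lborel)"
      using pml by measurable
    then have "(\<lambda>y. LINT x|lborel. p x * kern V a y x) \<in> borel_measurable lborel"
      by (rule lborel.borel_measurable_lebesgue_integral)
    then show ?thesis unfolding Q_def qf_def[abs_def] by simp
  qed
  have Dqm: "(\<lambda>y. Dq p V a y h) \<in> borel_measurable lborel" for h
  proof -
    have "(\<lambda>(y, x). p x * (kern V a (y::real^'d) x * (- ((y - a *\<^sub>R x) \<bullet> h) / V))) \<in> borel_measurable (lborel \<Otimes>\<^sub>M lborel)"
      using pml unfolding kern_def by measurable
    then have "(\<lambda>y. LINT x|lborel. p x * (kern V a y x * (- ((y - a *\<^sub>R x) \<bullet> h) / V))) \<in> borel_measurable lborel"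
      by (rule lborel.borel_measurable_lebesgue_integral)
    then show ?thesis unfolding Dq_def by simp
  qed
  obtain C where lip: "C-lipschitz_on ({0..T1} \<times> UNIV) (\<lambda>(t, x). s t x)" using s_lip by auto
  have T10: "T1 \<ge> 0"
  proof -
    have "1 \<le> 16 / \<delta> * real CARD('d) * (psi2_norm p + 1)"
    proof -
      have "1 \<le> 16 / \<delta>" using \<delta>_pos \<delta>_lt by (simp add: field_simps)
      also have "\<dots> \<le> 16 / \<delta> * (real CARD('d) * (psi2_norm p + 1))"
      proof -
        have "1 * 1 \<le> real CARD('d) * (psi2_norm p + 1)" using psi0 by (intro mult_mono) auto
        then have "16 / \<delta> * 1 \<le> 16 / \<delta> * (real CARD('d) * (psi2_norm p + 1))" using \<delta>_pos by (intro mult_left_mono) auto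
        then show ?thesis by simp
      qed
      finally show ?thesis by (simp add: mult.assoc)
    qed
    then have "ln (16 / \<delta> * real CARD('d) * (psi2_norm p + 1)) \<ge> 0" by simp
    then show ?thesis using T1_ge by linarith
  qed
  have sc: "continuous_on UNIV (s T1)"
  proof -
    have "continuous_on ({0..T1} \<times> UNIV) (\<lambda>(t, x). s t x)" by (rule lipschitz_on_continuous_on[OF lip])
    then have "continuous_on UNIV ((\<lambda>(t, x). s t x) \<circ> (\<lambda>x. (T1, x)))"
      by (rule continuous_on_compose[rotated, OF continuous_on_subset]) (auto intro!: continuous_intros simp: T10)
    then show ?thesis by (simp add: o_def)
  qed
  have sm: "s T1 \<in> borel_measurable lborel"
    using borel_measurable_continuous_onI[OF sc] by measurable
  define g where "g y = grad (\<lambda>z. ln (Q z)) y" for y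
  define A where "A y = (norm (g y - s T1 y))\<^sup>2" for y
  define mm where "mm y = (norm (g y - clip_score \<delta> (s T1) y))\<^sup>2" for y
  define c where "c = 1 / (9 * d)"
  define M where "M = ln (6 / \<epsilon>)"
  define K where "K = exp (- M) * exp (1 / (9 * d))"
  have M0: "M \<ge> 0" unfolding M_def using \<epsilon>_pos \<epsilon>_lt by simp
  have eM: "exp M = 6 / \<epsilon>" unfolding M_def using \<epsilon>_pos by simp
  have K0: "K \<ge> 0" unfolding K_def by simp
  have gbQ: "\<bar>g y $ i + y $ i\<bar> \<le> \<delta> / (2 * real CARD('d)) * (1 + norm y)" for y i
    unfolding g_def Q_def by (rule gb)
  have bd2: "\<beta> * \<delta>\<^sup>2 \<le> 1/36"
  proof -
    have "\<delta>\<^sup>2 > 0" using \<delta>_pos by simp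
    then have "\<beta> * \<delta>\<^sup>2 \<le> 1 / (36 * \<delta>\<^sup>2) * \<delta>\<^sup>2" using \<beta>_le by (intro mult_right_mono) auto
    also have "\<dots> = 1/36" using \<delta>_pos by simp
    finally show ?thesis .
  qed
  have pw: "exp (\<beta> * mm y) \<le> 1 + exp M * \<beta> * A y + K * exp (c * (norm y)\<^sup>2)" for y
  proof -
    note cb = clip_bound[OF \<delta>_pos gbQ, of y "s T1"]
    define B where "B = \<delta>\<^sup>2 * (1 + norm y)\<^sup>2 / d"
    have m1: "mm y \<le> A y" "mm y \<le> B" "0 \<le> mm y" using cb unfolding mm_def A_def B_def d_def by auto
    have es: "exp (\<beta> * mm y) \<le> 1 + exp M * \<beta> * A y + exp (2 * \<beta> * B - M)"
      by (rule exp_split[OF m1(3) m1(1) m1(2) \<beta>_pos M0])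
    have "2 * \<beta> * B = 2 * (\<beta> * \<delta>\<^sup>2) * (1 + norm y)\<^sup>2 / d" unfolding B_def by (simp add: mult_ac)
    also have "\<dots> \<le> 2 * (1/36) * (1 + norm y)\<^sup>2 / d" using bd2 d1 by (intro divide_right_mono mult_right_mono) auto
    also have "\<dots> \<le> 2 * (1/36) * (2 + 2 * (norm y)\<^sup>2) / d"
    proof -
      have "(1 + norm y)\<^sup>2 \<le> 2 + 2 * (norm y)\<^sup>2"
      proof -
        have "0 \<le> (1 - norm y)\<^sup>2" by simp
        then show ?thesis by (simp add: power2_eq_square algebra_simps)
      qed
      then show ?thesis using d1 by (intro divide_right_mono mult_left_mono) auto
    qed
    also have "\<dots> = 1 / (9 * d) + c * (norm y)\<^sup>2" unfolding c_def using d1 by (simp add: field_simps)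
    finally have "2 * \<beta> * B - M \<le> - M + 1 / (9 * d) + c * (norm y)\<^sup>2" by simp
    then have "exp (2 * \<beta> * B - M) \<le> exp (- M + 1 / (9 * d) + c * (norm y)\<^sup>2)" by simp
    also have "\<dots> = K * exp (c * (norm y)\<^sup>2)" unfolding K_def by (simp only: exp_add[symmetric])
    finally show ?thesis using es by simp
  qed
  have Aeq: "A y = (\<Sum>i\<in>UNIV. (Dq p V a y (axis i 1) * inverse (Q y) - s T1 y $ i)\<^sup>2)" for y
    unfolding A_def norm_sq_vec g_def Q_def by (simp add: grad_eq)
  have QAm: "(\<lambda>y. Q y * A y) \<in> borel_measurable lborel"
  proof -
    have "(\<lambda>y. s T1 y $ i) \<in> borel_measurable lborel" for i
    proof -
      have "(\<lambda>y. s T1 y \<bullet> axis i 1) \<in> borel_measurable lborel" using sm by measurable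
      then show ?thesis by (simp add: inner_axis)
    qed
    then show ?thesis unfolding Aeq using Qm Dqm by measurable
  qed
  have Em: "(\<lambda>y. K * (Q y * exp (c * (norm y)\<^sup>2))) \<in> borel_measurable lborel" using Qm by measurable
  have I1: "(\<integral>\<^sup>+ y. ennreal (Q y) \<partial>lborel) = 1"
  proof -
    have "(\<integral>\<^sup>+ y. ennreal ((LINT x|lborel. p x * kern V a y x) * exp (0 * (norm y)\<^sup>2)) \<partial>lborel)
       = ennreal ((1 - 2 * 0 * V) powr (- real DIM(real^'d) / 2)) * (\<integral>\<^sup>+ x. ennreal (p x * exp (0 * (norm (a *\<^sub>R x))\<^sup>2 / (1 - 2 * 0 * V))) \<partial>lborel)"
      by (rule q_moment[OF p_meas p_nonneg pint V0]) simp
    then show ?thesis using p_prob unfolding Q_def qf_def[abs_def] by simp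
  qed
  have I3: "(\<integral>\<^sup>+ y. ennreal (Q y * exp (c * (norm y)\<^sup>2)) \<partial>lborel) \<le> ennreal (18/7)"
  proof -
    have d0: "d > 0" using d1 by simp
    have c0: "c > 0" unfolding c_def using d0 by simp
    have cV: "2 * c * V \<le> 2 / (9 * d)" unfolding c_def using prm(3) d0 by (simp add: field_simps)
    have cV1: "2 * c * V < 1"
    proof -
      have "2 / (9 * d) \<le> 2 / 9" using d1 by (simp add: field_simps)
      then show ?thesis using cV by linarith
    qed
    define w where "w = 1 - 2 * c * V"
    have w1: "w \<le> 1" unfolding w_def using c0 V0 by simp
    have w0: "w \<ge> 1 - 2 / (9 * real CARD('d))" unfolding w_def using cV d_def by simp
    have wpos: "w \<ge> 7/9"
    proof -
      have "2 / (9 * d) \<le> 2 / 9" using d1 by (simp add: field_simps)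
      then show ?thesis using w0 d_def by simp
    qed
    have pwb: "w powr (- real DIM(real^'d) / 2) \<le> 9/7"
      using powr_card_bound[of "CARD('d)" w] w1 w0 by simp
    have ex: "c * (norm (a *\<^sub>R x))\<^sup>2 / w \<le> (norm x)\<^sup>2 / \<tau>\<^sup>2" for x
    proof -
      have "c * (norm (a *\<^sub>R x))\<^sup>2 / w = (c / w * a\<^sup>2) * (norm x)\<^sup>2" using a0 by (simp add: power_mult_distrib)
      also have "c / w * a\<^sup>2 \<le> 1 / \<tau>\<^sup>2"
      proof -
        have "c \<le> 1/9" unfolding c_def using d1 by (simp add: field_simps)
        then have "c / w \<le> (1/9) / (7/9)" using c0 wpos by (intro frac_le) auto
        moreover have "a\<^sup>2 \<le> 1 / \<tau>\<^sup>2"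
        proof -
          have "(a * \<tau>) \<le> 1/16" using prm(5) P a0 by (smt (verit) mult_left_mono)
          then have "(a * \<tau>)\<^sup>2 \<le> (1/16)\<^sup>2" using a0 \<tau> by (intro power_mono) auto
          then have "a\<^sup>2 * \<tau>\<^sup>2 \<le> (1/16)\<^sup>2" by (simp only: power_mult_distrib)
          moreover have "(1/16::real)\<^sup>2 \<le> 1" by (simp add: power2_eq_square)
          ultimately have "a\<^sup>2 * \<tau>\<^sup>2 \<le> 1" by linarith
          then show ?thesis using \<tau> by (simp add: field_simps)
        qed
        ultimately have "c / w * a\<^sup>2 \<le> (1/9) / (7/9) * (1 / \<tau>\<^sup>2)"
          using c0 wpos by (intro mult_mono) auto
        also have "\<dots> \<le> 1 / \<tau>\<^sup>2" using \<tau> by (simp add: field_simps)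
        finally show ?thesis .
      qed
      then have "(c / w * a\<^sup>2) * (norm x)\<^sup>2 \<le> (1 / \<tau>\<^sup>2) * (norm x)\<^sup>2" by (intro mult_right_mono) auto
      finally show ?thesis by simp
    qed
    have "(\<integral>\<^sup>+ y. ennreal (Q y * exp (c * (norm y)\<^sup>2)) \<partial>lborel)
       = ennreal (w powr (- real DIM(real^'d) / 2)) * (\<integral>\<^sup>+ x. ennreal (p x * exp (c * (norm (a *\<^sub>R x))\<^sup>2 / w)) \<partial>lborel)"
      unfolding Q_def qf_def[abs_def] w_def by (rule q_moment[OF p_meas p_nonneg pint V0 cV1])
    also have "\<dots> \<le> ennreal (9/7) * 2"
    proof (intro mult_mono)
      show "ennreal (w powr (- real DIM(real^'d) / 2)) \<le> ennreal (9/7)" using pwb by (rule ennreal_leI)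
      have "(\<integral>\<^sup>+ x. ennreal (p x * exp (c * (norm (a *\<^sub>R x))\<^sup>2 / w)) \<partial>lborel) \<le> (\<integral>\<^sup>+ x. ennreal (p x * exp ((norm x)^2 / \<tau>^2)) \<partial>lborel)"
        using ex p_nonneg by (intro nn_integral_mono ennreal_leI mult_left_mono) auto
      then show "(\<integral>\<^sup>+ x. ennreal (p x * exp (c * (norm (a *\<^sub>R x))\<^sup>2 / w)) \<partial>lborel) \<le> 2" using NN by simp
    qed auto
    also have "\<dots> = ennreal (18/7)" by (simp add: ennreal_mult[symmetric] ennreal_numeral[symmetric] del: ennreal_numeral)
    finally show ?thesis .
  qed
  have bnd_le: "1 / (550 * \<beta>) * \<epsilon> powr (2 + 36 * \<beta> * \<delta>^2) \<le> 1 / (550 * \<beta>) * \<epsilon>\<^sup>2"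
  proof -
    have "\<epsilon> powr (2 + 36 * \<beta> * \<delta>^2) \<le> \<epsilon> powr 2"
      using \<epsilon>_pos \<epsilon>_lt \<beta>_pos by (intro powr_mono') auto
    also have "\<epsilon> powr 2 = \<epsilon>\<^sup>2" using \<epsilon>_pos by (simp add: powr_realpow[of \<epsilon> 2, simplified])
    finally show ?thesis using \<beta>_pos by (intro mult_left_mono) auto
  qed
  have I2: "(\<integral>\<^sup>+ y. ennreal (Q y * A y) \<partial>lborel) \<le> ennreal (1 / (550 * \<beta>) * \<epsilon>\<^sup>2)"
  proof -
    have "(\<integral>\<^sup>+ y. ennreal (Q y * A y) \<partial>lborel) \<le> ennreal (1 / (550 * \<beta>) * \<epsilon> powr (2 + 36 * \<beta> * \<delta>^2))"
      using b_small unfolding ou Q_def[symmetric] A_def g_def .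
    also have "\<dots> \<le> ennreal (1 / (550 * \<beta>) * \<epsilon>\<^sup>2)" by (rule ennreal_leI[OF bnd_le])
    finally show ?thesis .
  qed
  have "(\<integral>\<^sup>+ y. ennreal (Q y * exp (\<beta> * mm y)) \<partial>lborel)
      \<le> (\<integral>\<^sup>+ y. ennreal (Q y) + ennreal (exp M * \<beta> * (Q y * A y)) + ennreal (K * (Q y * exp (c * (norm y)\<^sup>2))) \<partial>lborel)"
  proof (intro nn_integral_mono)
    fix y
    have qa: "0 \<le> Q y * A y" using Q0[of y] unfolding A_def by simp
    have "Q y * exp (\<beta> * mm y) \<le> Q y * (1 + exp M * \<beta> * A y + K * exp (c * (norm y)\<^sup>2))"
      using pw[of y] Q0[of y] by (intro mult_left_mono) auto
    also have "\<dots> = Q y + exp M * \<beta> * (Q y * A y) + K * (Q y * exp (c * (norm y)\<^sup>2))" by (simp add: algebra_simps)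
    finally have "ennreal (Q y * exp (\<beta> * mm y)) \<le> ennreal (Q y + exp M * \<beta> * (Q y * A y) + K * (Q y * exp (c * (norm y)\<^sup>2)))"
      by (rule ennreal_leI)
    also have "\<dots> = ennreal (Q y) + ennreal (exp M * \<beta> * (Q y * A y)) + ennreal (K * (Q y * exp (c * (norm y)\<^sup>2)))"
      using Q0[of y] qa \<beta>_pos K0 by (simp add: ennreal_plus[symmetric] del: ennreal_plus)
    finally show "ennreal (Q y * exp (\<beta> * mm y)) \<le> ennreal (Q y) + ennreal (exp M * \<beta> * (Q y * A y)) + ennreal (K * (Q y * exp (c * (norm y)\<^sup>2)))" .
  qed
  also have "\<dots> = (\<integral>\<^sup>+ y. ennreal (Q y) \<partial>lborel) + (\<integral>\<^sup>+ y. ennreal (exp M * \<beta> * (Q y * A y)) \<partial>lborel) + (\<integral>\<^sup>+ y. ennreal (K * (Q y * exp (c * (norm y)\<^sup>2))) \<partial>lborel)"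
    using Qm QAm Em by (simp add: nn_integral_add)
  also have "(\<integral>\<^sup>+ y. ennreal (exp M * \<beta> * (Q y * A y)) \<partial>lborel) = ennreal (exp M * \<beta>) * (\<integral>\<^sup>+ y. ennreal (Q y * A y) \<partial>lborel)"
    using QAm \<beta>_pos Q0 by (subst nn_integral_cmult[symmetric]) (auto simp: ennreal_mult' A_def intro!: nn_integral_cong)
  also have "(\<integral>\<^sup>+ y. ennreal (K * (Q y * exp (c * (norm y)\<^sup>2))) \<partial>lborel) = ennreal K * (\<integral>\<^sup>+ y. ennreal (Q y * exp (c * (norm y)\<^sup>2)) \<partial>lborel)"
    using Qm K0 by (subst nn_integral_cmult[symmetric]) (auto simp: ennreal_mult' intro!: nn_integral_cong)
  also have "(\<integral>\<^sup>+ y. ennreal (Q y) \<partial>lborel) + ennreal (exp M * \<beta>) * (\<integral>\<^sup>+ y. ennreal (Q y * A y) \<partial>lborel) + ennreal K * (\<integral>\<^sup>+ y. ennreal (Q y * exp (c * (norm y)\<^sup>2)) \<partial>lborel)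
      \<le> 1 + ennreal (exp M * \<beta>) * ennreal (1 / (550 * \<beta>) * \<epsilon>\<^sup>2) + ennreal K * ennreal (18/7)"
    unfolding I1 by (intro add_mono mult_left_mono I2 I3) auto
  also have "\<dots> = ennreal (1 + exp M * \<beta> * (1 / (550 * \<beta>) * \<epsilon>\<^sup>2) + K * (18/7))"
  proof -
    have x0: "0 \<le> exp M * \<beta>" "0 \<le> 1 / (550 * \<beta>) * \<epsilon>\<^sup>2" using \<beta>_pos by auto
    have e1: "ennreal (exp M * \<beta>) * ennreal (1 / (550 * \<beta>) * \<epsilon>\<^sup>2) = ennreal (exp M * \<beta> * (1 / (550 * \<beta>) * \<epsilon>\<^sup>2))"
      by (rule ennreal_mult'[symmetric, OF x0(1)])
    have e2: "ennreal K * ennreal (18/7) = ennreal (K * (18/7))" by (rule ennreal_mult'[symmetric, OF K0])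
    have y0: "0 \<le> exp M * \<beta> * (1 / (550 * \<beta>) * \<epsilon>\<^sup>2)" "0 \<le> K * (18/7)" using x0 K0 by auto
    have e3: "ennreal (1 + exp M * \<beta> * (1 / (550 * \<beta>) * \<epsilon>\<^sup>2) + K * (18/7))
        = ennreal 1 + ennreal (exp M * \<beta> * (1 / (550 * \<beta>) * \<epsilon>\<^sup>2)) + ennreal (K * (18/7))"
      using y0 by (simp only: ennreal_plus add_nonneg_nonneg zero_le_one)
    show ?thesis unfolding e1 e2 e3 by simp
  qed
  also have "\<dots> \<le> ennreal (exp \<epsilon>)"
  proof (rule ennreal_leI)
    have t2: "exp M * \<beta> * (1 / (550 * \<beta>) * \<epsilon>\<^sup>2) = 6 * \<epsilon> / 550"
      unfolding eM using \<beta>_pos \<epsilon>_pos by (simp add: field_simps power2_eq_square)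
    have t3: "K * (18/7) \<le> \<epsilon> / 6 * (9/8) * (18/7)"
    proof -
      have "exp (1 / (9 * d)) \<le> exp (1/9)" using d1 by (simp add: field_simps)
      also have "\<dots> \<le> 9/8" by (rule exp_ninth)
      finally have "exp (1 / (9 * d)) \<le> 9/8" .
      moreover have "exp (- M) = \<epsilon> / 6" using eM by (simp add: exp_minus)
      ultimately have "\<epsilon> / 6 * exp (1 / (9 * d)) \<le> \<epsilon> / 6 * (9/8)" and "K = \<epsilon> / 6 * exp (1 / (9 * d))"
        unfolding K_def using \<epsilon>_pos by (intro mult_left_mono, auto)
      then have "K \<le> \<epsilon> / 6 * (9/8)" by simp
      then show ?thesis by (intro mult_right_mono) auto
    qed
    have "1 + exp M * \<beta> * (1 / (550 * \<beta>) * \<epsilon>\<^sup>2) + K * (18/7) \<le> 1 + \<epsilon>"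
      using t2 t3 \<epsilon>_pos by simp
    also have "\<dots> \<le> exp \<epsilon>" by (rule exp_ge_add_one_self)
    finally show "1 + exp M * \<beta> * (1 / (550 * \<beta>) * \<epsilon>\<^sup>2) + K * (18/7) \<le> exp \<epsilon>" .
  qed
  finally show ?thesis unfolding ou Q_def[symmetric] mm_def g_def .
qed

end
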